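(* (i) If $f:[a,b]\to\mathbb{R}_{\mathcal F}$ is strongly measurable, then $F:[a,b]\to[0,\infty)$, $F(x)=D(\tilde0,f(x))$, is Lebesgue measurable on $[a,b]$. (ii) Let $1\le p<\infty$. For any $f,g\in L^p([a,b];\mathbb{R}_{\mathcal F})$, the function $F(x)=D(f(x),g(x))$ is Lebesgue measurable and $\int_a^bF(x)^pdx<\infty$. Moreover, with $$D_p(f,g)=\Big(\int_a^b[D(f(x),g(x))]^pdx\Big)^{1/p},$$ $(L^p([a,b];\mathbb{R}_{\mathcal F}),D_p)$ is a complete metric space (where $f=g$ means $f(x)=g(x)$ for a.e. $x\in[a,b]$), and for all $f,g,h,e\in L^p([a,b];\mathbb{R}_{\mathcal F})$, $\lambda\in\mathbb{R}$: $D_p(f\oplus h,g\oplus h)=D_p(f,g)$, $D_p(\lambda\odot f,\lambda\odot g)=|\lambda|D_p(f,g)$, $D_p(f\oplus g,h\oplus e)\le D_p(f,h)+D_p(g,e)$.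
   Context: A fuzzy number is a function $u:\mathbb{R}\to[0,1]$ which is normal, fuzzy convex ($u(tx+(1-t)y)\ge\min\{u(x),u(y)\}$), upper semicontinuous, and with $\overline{\{x:u(x)>0\}}$ compact; $\mathbb{R}_{\mathcal F}$ is the set of fuzzy numbers. Level sets $[u]^r=\{x:u(x)\ge r\}$ ($r\in(0,1]$), $[u]^0=\overline{\{u>0\}}$, are compact intervals $[u_-(r),u_+(r)]$. Operations: $[u\oplus v]^r=[u]^r+[v]^r$, $[\lambda\odot u]^r=\lambda[u]^r$, $\tilde0=\chi_{\{0\}}$; metric $D(u,v)=\sup_{r\in[0,1]}\max\{|u_-(r)-v_-(r)|,|u_+(r)-v_+(r)|\}$. Operations on functions are pointwise. Writing $[f(x)]^r=[f_-(x)(r),f_+(x)(r)]$, $f:[a,b]\to\mathbb{R}_{\mathcal F}$ is strongly measurable if for each $r\in[0,1]$ the functions $x\mapsto f_-(x)(r)$ and $x\mapsto f_+(x)(r)$ are Lebesgue measurable on $[a,b]$. $L^p([a,b];\mathbb{R}_{\mathcal F})$ is the set of strongly measurable $f$ with $\int_a^b(D(\tilde0,f(x)))^pdx<\infty$. *)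

theory Defs
  imports "HOL-Analysis.Analysis"
begin

definition usc :: "(real \<Rightarrow> real) \<Rightarrow> bool" where
  "usc u \<longleftrightarrow> (\<forall>x. \<forall>e>0. \<exists>d>0. \<forall>y. \<bar>y - x\<bar> < d \<longrightarrow> u y < u x + e)"

definition fuzzy_number :: "(real \<Rightarrow> real) \<Rightarrow> bool" where
  "fuzzy_number u \<longleftrightarrow>
     (\<forall>x. 0 \<le> u x \<and> u x \<le> 1) \<and>
     (\<exists>x. u x = 1) \<and>
     (\<forall>x y t. 0 \<le> t \<and> t \<le> 1 \<longrightarrow> u (t * x + (1 - t) * y) \<ge> min (u x) (u y)) \<and>
     usc u \<and>
     compact (closure {x. u x > 0})"

definition level :: "(real \<Rightarrow> real) \<Rightarrow> real \<Rightarrow> real set" where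
  "level u r = (if r = 0 then closure {x. u x > 0} else {x. u x \<ge> r})"

definition lower :: "(real \<Rightarrow> real) \<Rightarrow> real \<Rightarrow> real" where
  "lower u r = Inf (level u r)"

definition upper :: "(real \<Rightarrow> real) \<Rightarrow> real \<Rightarrow> real" where
  "upper u r = Sup (level u r)"

text \<open>The fuzzy number whose r-level sets (r in (0,1]) are given by L.\<close>
definition fuzzy_of_levels :: "(real \<Rightarrow> real set) \<Rightarrow> (real \<Rightarrow> real)" where
  "fuzzy_of_levels L z = Sup ({0} \<union> {r \<in> {0<..1}. z \<in> L r})"

definition fadd :: "(real \<Rightarrow> real) \<Rightarrow> (real \<Rightarrow> real) \<Rightarrow> (real \<Rightarrow> real)" (infixl "\<oplus>\<^sub>F" 65) where
  "u \<oplus>\<^sub>F v = fuzzy_of_levels (\<lambda>r. {x + y | x y. x \<in> level u r \<and> y \<in> level v r})"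

definition fscale :: "real \<Rightarrow> (real \<Rightarrow> real) \<Rightarrow> (real \<Rightarrow> real)" (infixr "\<odot>\<^sub>F" 75) where
  "c \<odot>\<^sub>F u = fuzzy_of_levels (\<lambda>r. (\<lambda>x. c * x) ` level u r)"

definition fzero :: "real \<Rightarrow> real" where
  "fzero = (\<lambda>x. if x = 0 then 1 else 0)"

definition fdist :: "(real \<Rightarrow> real) \<Rightarrow> (real \<Rightarrow> real) \<Rightarrow> real" where
  "fdist u v = (SUP r\<in>{0..1}. max \<bar>lower u r - lower v r\<bar> \<bar>upper u r - upper v r\<bar>)"

definition ffadd :: "('a \<Rightarrow> real \<Rightarrow> real) \<Rightarrow> ('a \<Rightarrow> real \<Rightarrow> real) \<Rightarrow> ('a \<Rightarrow> real \<Rightarrow> real)" where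
  "ffadd f g = (\<lambda>x. f x \<oplus>\<^sub>F g x)"

definition ffscale :: "real \<Rightarrow> ('a \<Rightarrow> real \<Rightarrow> real) \<Rightarrow> ('a \<Rightarrow> real \<Rightarrow> real)" where
  "ffscale c f = (\<lambda>x. c \<odot>\<^sub>F f x)"

definition strongly_measurable :: "real \<Rightarrow> real \<Rightarrow> (real \<Rightarrow> real \<Rightarrow> real) \<Rightarrow> bool" where
  "strongly_measurable a b f \<longleftrightarrow>
     (\<forall>x\<in>{a..b}. fuzzy_number (f x)) \<and>
     (\<forall>r\<in>{0..1}.
        (\<lambda>x. lower (f x) r) \<in> borel_measurable (restrict_space lebesgue {a..b}) \<and>
        (\<lambda>x. upper (f x) r) \<in> borel_measurable (restrict_space lebesgue {a..b}))"

definition fuzzy_Lp :: "real \<Rightarrow> real \<Rightarrow> real \<Rightarrow> (real \<Rightarrow> real \<Rightarrow> real) set" where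
  "fuzzy_Lp p a b = {f. strongly_measurable a b f \<and>
     (\<integral>\<^sup>+ x\<in>{a..b}. ennreal (fdist fzero (f x) powr p) \<partial>lebesgue) < \<infinity>}"

definition Dp :: "real \<Rightarrow> real \<Rightarrow> real \<Rightarrow> (real \<Rightarrow> real \<Rightarrow> real) \<Rightarrow> (real \<Rightarrow> real \<Rightarrow> real) \<Rightarrow> real" where
  "Dp p a b f g = (LINT x:{a..b}|lebesgue. fdist (f x) (g x) powr p) powr (1 / p)"

end

theory Submission
  imports Defs
begin



lemma cc_interval:
  fixes S :: "real set"
  assumes "compact S" "S \<noteq> {}" "convex S"
  shows "S = {Inf S..Sup S}" "Inf S \<le> Sup S"
proof -
  have b: "bounded S" using assms compact_imp_bounded by auto
  have cl: "closed S" using assms compact_imp_closed by auto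
  have i: "Inf S \<in> S" by (rule closed_contains_Inf[OF assms(2) bounded_imp_bdd_below[OF b] cl])
  have s: "Sup S \<in> S" by (rule closed_contains_Sup[OF assms(2) bounded_imp_bdd_above[OF b] cl])
  show "S = {Inf S..Sup S}"
  proof
    show "S \<subseteq> {Inf S..Sup S}"
      using cInf_lower[OF _ bounded_imp_bdd_below[OF b]] cSup_upper[OF _ bounded_imp_bdd_above[OF b]] by auto
    show "{Inf S..Sup S} \<subseteq> S"
    proof
      fix x assume x: "x \<in> {Inf S..Sup S}"
      have "is_interval S" using assms(3) is_interval_convex_1 by auto
      then have "\<forall>a\<in>S. \<forall>b\<in>S. \<forall>x. a \<le> x \<and> x \<le> b \<longrightarrow> x \<in> S" unfolding is_interval_1 .
      from this[rule_format, OF i s, of x] x show "x \<in> S" by simp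
    qed
  qed
  show "Inf S \<le> Sup S" using i b by (auto intro: cSup_upper bounded_imp_bdd_above)
qed

lemma fn_range: "fuzzy_number u \<Longrightarrow> 0 \<le> u x \<and> u x \<le> 1"
  unfolding fuzzy_number_def by auto

lemma fn_conv: "fuzzy_number u \<Longrightarrow> 0 \<le> t \<Longrightarrow> t \<le> 1 \<Longrightarrow> u (t * x + (1 - t) * y) \<ge> min (u x) (u y)"
  unfolding fuzzy_number_def by blast

lemma fn_level_pos_closed:
  assumes "fuzzy_number u"
  shows "closed {x. u x \<ge> r}"
proof -
  have usc: "usc u" using assms unfolding fuzzy_number_def by auto
  have "open (- {x. u x \<ge> r})"
    unfolding open_real
  proof
    fix x assume "x \<in> - {x. u x \<ge> r}"
    then have "u x < r" by auto
    then obtain d where d: "d > 0" "\<forall>y. \<bar>y - x\<bar> < d \<longrightarrow> u y < u x + (r - u x)"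
      using usc unfolding usc_def by (meson diff_gt_0_iff_gt)
    have "\<forall>x'. \<bar>x' - x\<bar> < d \<longrightarrow> x' \<in> - {x. r \<le> u x}"
    proof (intro allI impI)
      fix x' assume "\<bar>x' - x\<bar> < d"
      then have "u x' < r" using d(2) by auto
      then show "x' \<in> - {x. r \<le> u x}" by auto
    qed
    then show "\<exists>e>0. \<forall>x'. \<bar>x' - x\<bar> < e \<longrightarrow> x' \<in> - {x. r \<le> u x}" using d(1) by blast
  qed
  then show ?thesis by (simp add: closed_def)
qed

lemma fn_level_conv:
  assumes "fuzzy_number u"
  shows "convex {x. u x \<ge> r}"
  unfolding convex_alt
proof (intro ballI allI impI)
  fix x y and t :: real assume "x \<in> {x. r \<le> u x}" "y \<in> {x. r \<le> u x}" "0 \<le> t \<and> t \<le> 1"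
  then show "(1 - t) *\<^sub>R x + t *\<^sub>R y \<in> {x. r \<le> u x}"
  proof -
    assume a: "x \<in> {x. r \<le> u x}" "y \<in> {x. r \<le> u x}" "0 \<le> t \<and> t \<le> 1"
    have "u (t * y + (1 - t) * x) \<ge> min (u y) (u x)"
      using fn_conv[OF assms, of t y x] a(3) by auto
    moreover have "t * y + (1 - t) * x = (1 - t) *\<^sub>R x + t *\<^sub>R y" by simp
    ultimately show ?thesis using a by auto
  qed
qed

lemma fn_pos_conv:
  assumes "fuzzy_number u"
  shows "convex {x. u x > 0}"
  unfolding convex_alt
proof (intro ballI allI impI)
  fix x y and t :: real assume "x \<in> {x. 0 < u x}" "y \<in> {x. 0 < u x}" "0 \<le> t \<and> t \<le> 1"
  then show "(1 - t) *\<^sub>R x + t *\<^sub>R y \<in> {x. 0 < u x}"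
  proof -
    assume a: "x \<in> {x. 0 < u x}" "y \<in> {x. 0 < u x}" "0 \<le> t \<and> t \<le> 1"
    have "u (t * y + (1 - t) * x) \<ge> min (u y) (u x)"
      using fn_conv[OF assms, of t y x] a(3) by auto
    moreover have "t * y + (1 - t) * x = (1 - t) *\<^sub>R x + t *\<^sub>R y" by simp
    ultimately show ?thesis using a by auto
  qed
qed

lemma fn_level_props:
  assumes u: "fuzzy_number u" and r: "r \<in> {0..1}"
  shows "compact (level u r)" "level u r \<noteq> {}" "convex (level u r)"
proof -
  obtain x0 where x0: "u x0 = 1" using u unfolding fuzzy_number_def by auto
  have c0: "compact (closure {x. u x > 0})" using u unfolding fuzzy_number_def by auto
  have sub: "{x. u x \<ge> r} \<subseteq> closure {x. u x > 0}" if "r > 0" for r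
    using that closure_subset by fastforce
  show "compact (level u r)"
  proof (cases "r = 0")
    case True then show ?thesis using c0 by (simp add: level_def)
  next
    case False
    then have "r > 0" using r by auto
    have "bounded {x. u x \<ge> r}"
      using bounded_subset[OF compact_imp_bounded[OF c0] sub[OF \<open>r>0\<close>]] .
    then show ?thesis using False fn_level_pos_closed[OF u] by (simp add: level_def compact_eq_bounded_closed)
  qed
  have "x0 \<in> level u r"
  proof (cases "r = 0")
    case True
    have "x0 \<in> {x. u x > 0}" using x0 by simp
    then show ?thesis using True closure_subset[of "{x. u x > 0}"] by (auto simp: level_def)
  next
    case False then show ?thesis using x0 r by (simp add: level_def)
  qed
  then show "level u r \<noteq> {}" by blast
  show "convex (level u r)"
    using fn_level_conv[OF u] fn_pos_conv[OF u] convex_closure by (simp add: level_def)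
qed

lemma fn_level_ivl:
  assumes u: "fuzzy_number u" and r: "r \<in> {0..1}"
  shows "level u r = {lower u r..upper u r}" "lower u r \<le> upper u r"
  using cc_interval[OF fn_level_props[OF u r]] by (auto simp: lower_def upper_def)

lemma fn_level_mono:
  assumes u: "fuzzy_number u" and "0 \<le> r" "r \<le> s"
  shows "level u s \<subseteq> level u r"
proof (cases "r = 0")
  case True
  show ?thesis
  proof (cases "s = 0")
    case False
    then have "{x. u x \<ge> s} \<subseteq> {x. u x > 0}" using assms by auto
    then show ?thesis using True False closure_subset by (auto simp: level_def)
  qed (simp add: True)
next
  case False
  then show ?thesis using assms by (auto simp: level_def)
qed

lemma fn_lower_upper_mono:
  assumes u: "fuzzy_number u" and "0 \<le> r" "r \<le> s" "s \<le> 1"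
  shows "lower u r \<le> lower u s" "upper u s \<le> upper u r"
proof -
  have "level u s \<subseteq> level u r" using fn_level_mono assms by auto
  then show "lower u r \<le> lower u s" "upper u s \<le> upper u r"
    using fn_level_ivl[OF u, of r] fn_level_ivl[OF u, of s] assms by auto
qed

lemma fn_level_pos: "0 < r \<Longrightarrow> level u r = {x. u x \<ge> r}"
  by (simp add: level_def)




definition good :: "(real\<Rightarrow>real) \<Rightarrow> (real\<Rightarrow>real) \<Rightarrow> bool" where
 "good l h \<longleftrightarrow> (\<forall>r s. 0 \<le> r \<longrightarrow> r \<le> s \<longrightarrow> s \<le> 1 \<longrightarrow> l r \<le> l s \<and> h s \<le> h r) \<and>
    (\<forall>r\<in>{0..1}. l r \<le> h r) \<and>
    (\<forall>r\<in>{0<..1}. \<forall>e>0. \<exists>s\<in>{0<..<r}. l r - e < l s \<and> h s < h r + e) \<and>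
    (\<forall>e>0. \<exists>s\<in>{0<..1}. l s < l 0 + e \<and> h 0 - e < h s)"

lemma fn_ge_level:
  assumes u: "fuzzy_number u" and r: "0 < r" and all: "\<forall>s\<in>{0<..<r}. u z \<ge> s"
  shows "u z \<ge> r"
proof (rule ccontr)
  assume "\<not> u z \<ge> r"
  then have "u z < r" by simp
  moreover have "u z \<ge> 0" using fn_range[OF u] by auto
  ultimately have "(u z + r) / 2 \<in> {0<..<r}" using r by auto
  then have "u z \<ge> (u z + r) / 2" using all by blast
  then show False using \<open>u z < r\<close> by simp
qed

lemma fn_good:
  assumes u: "fuzzy_number u"
  shows "good (lower u) (upper u)"
proof -
  have mono: "\<And>r s. 0 \<le> r \<Longrightarrow> r \<le> s \<Longrightarrow> s \<le> 1 \<Longrightarrow> lower u r \<le> lower u s \<and> upper u s \<le> upper u r"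
    using fn_lower_upper_mono[OF u] by blast
  have le: "\<forall>r\<in>{0..1}. lower u r \<le> upper u r" using fn_level_ivl[OF u] by auto
  have LAl: "\<exists>s\<in>{0<..<r}. lower u r - e < lower u s" if r: "r \<in> {0<..1}" and e: "e > 0" for r e
  proof (rule ccontr)
    assume "\<not> ?thesis"
    then have A: "\<forall>s\<in>{0<..<r}. lower u s \<le> lower u r - e" by auto
    define z where "z = lower u r - e"
    have "\<forall>s\<in>{0<..<r}. u z \<ge> s"
    proof
      fix s assume s: "s \<in> {0<..<r}"
      have a1: "lower u s \<le> z" using A s by (auto simp: z_def)
      have a2: "lower u r \<le> upper u r" using le r by auto
      have a3: "upper u r \<le> upper u s" using mono[of s r] s r by auto
      have "z \<in> {lower u s..upper u s}" using a1 a2 a3 e by (auto simp: z_def)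
      then have "z \<in> level u s" using fn_level_ivl[OF u, of s] s r by auto
      then show "u z \<ge> s" using s by (simp add: level_def)
    qed
    then have "u z \<ge> r" using fn_ge_level[OF u] r by auto
    then have "z \<in> level u r" using r by (simp add: level_def)
    then have "lower u r \<le> z" using fn_level_ivl[OF u, of r] r by auto
    then show False using e unfolding z_def by simp
  qed
  have LAh: "\<exists>s\<in>{0<..<r}. upper u s < upper u r + e" if r: "r \<in> {0<..1}" and e: "e > 0" for r e
  proof (rule ccontr)
    assume "\<not> ?thesis"
    then have A: "\<forall>s\<in>{0<..<r}. upper u r + e \<le> upper u s" by auto
    define z where "z = upper u r + e"
    have "\<forall>s\<in>{0<..<r}. u z \<ge> s"
    proof
      fix s assume s: "s \<in> {0<..<r}"
      have a1: "z \<le> upper u s" using A s by (auto simp: z_def)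
      have a2: "lower u r \<le> upper u r" using le r by auto
      have a3: "lower u s \<le> lower u r" using mono[of s r] s r by auto
      have "z \<in> {lower u s..upper u s}" using a1 a2 a3 e by (auto simp: z_def)
      then have "z \<in> level u s" using fn_level_ivl[OF u, of s] s r by auto
      then show "u z \<ge> s" using s by (simp add: level_def)
    qed
    then have "u z \<ge> r" using fn_ge_level[OF u] r by auto
    then have "z \<in> level u r" using r by (simp add: level_def)
    then have "z \<le> upper u r" using fn_level_ivl[OF u, of r] r by auto
    then show False using e unfolding z_def by simp
  qed
  have LA: "\<forall>r\<in>{0<..1}. \<forall>e>0. \<exists>s\<in>{0<..<r}. lower u r - e < lower u s \<and> upper u s < upper u r + e"
  proof (intro ballI allI impI)
    fix r e :: real assume r: "r \<in> {0<..1}" and e: "e > 0"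
    obtain s1 where s1: "s1 \<in> {0<..<r}" "lower u r - e < lower u s1" using LAl[OF r e] by auto
    obtain s2 where s2: "s2 \<in> {0<..<r}" "upper u s2 < upper u r + e" using LAh[OF r e] by auto
    define s where "s = max s1 s2"
    have "s \<in> {0<..<r}" using s1 s2 unfolding s_def by auto
    moreover have "lower u s1 \<le> lower u s" "upper u s \<le> upper u s2"
      using mono[of s1 s] mono[of s2 s] s1 s2 r unfolding s_def by auto
    moreover have "lower u r - e < lower u s" using s1(2) calculation(2) by linarith
    moreover have "upper u s < upper u r + e" using s2(2) calculation(3) by linarith
    ultimately show "\<exists>s\<in>{0<..<r}. lower u r - e < lower u s \<and> upper u s < upper u r + e"
      by blast
  qed
  have pos_in: "x \<in> level u (u x)" if "u x > 0" for x
    using that by (simp add: level_def)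
  have ZAl: "\<exists>s\<in>{0<..1}. lower u s < lower u 0 + e" if e: "e > 0" for e
  proof (rule ccontr)
    assume "\<not> ?thesis"
    then have A: "\<forall>s\<in>{0<..1}. lower u 0 + e \<le> lower u s" by auto
    have "{x. u x > 0} \<subseteq> {lower u 0 + e..}"
    proof
      fix x assume "x \<in> {x. u x > 0}"
      then have x: "u x > 0" by simp
      then have "u x \<in> {0<..1}" using fn_range[OF u, of x] by auto
      moreover have "x \<in> level u (u x)" using pos_in x by auto
      ultimately have "lower u (u x) \<le> x" using fn_level_ivl[OF u, of "u x"] by auto
      then show "x \<in> {lower u 0 + e..}" using A \<open>u x \<in> {0<..1}\<close> by force
    qed
    then have "closure {x. u x > 0} \<subseteq> {lower u 0 + e..}"
      by (rule closure_minimal) simp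
    moreover have "lower u 0 \<in> level u 0" using fn_level_ivl[OF u, of 0] by auto
    ultimately show False using e by (auto simp: level_def)
  qed
  have ZAh: "\<exists>s\<in>{0<..1}. upper u 0 - e < upper u s" if e: "e > 0" for e
  proof (rule ccontr)
    assume "\<not> ?thesis"
    then have A: "\<forall>s\<in>{0<..1}. upper u s \<le> upper u 0 - e" by auto
    have "{x. u x > 0} \<subseteq> {..upper u 0 - e}"
    proof
      fix x assume "x \<in> {x. u x > 0}"
      then have x: "u x > 0" by simp
      then have "u x \<in> {0<..1}" using fn_range[OF u, of x] by auto
      moreover have "x \<in> level u (u x)" using pos_in x by auto
      ultimately have "x \<le> upper u (u x)" using fn_level_ivl[OF u, of "u x"] by auto
      then show "x \<in> {..upper u 0 - e}" using A \<open>u x \<in> {0<..1}\<close> by force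
    qed
    then have "closure {x. u x > 0} \<subseteq> {..upper u 0 - e}"
      by (rule closure_minimal) simp
    moreover have "upper u 0 \<in> level u 0" using fn_level_ivl[OF u, of 0] by auto
    ultimately show False using e by (auto simp: level_def)
  qed
  have ZA: "\<forall>e>0. \<exists>s\<in>{0<..1}. lower u s < lower u 0 + e \<and> upper u 0 - e < upper u s"
  proof (intro allI impI)
    fix e :: real assume e: "e > 0"
    obtain s1 where s1: "s1 \<in> {0<..1}" "lower u s1 < lower u 0 + e" using ZAl[OF e] by auto
    obtain s2 where s2: "s2 \<in> {0<..1}" "upper u 0 - e < upper u s2" using ZAh[OF e] by auto
    define s where "s = min s1 s2"
    have "s \<in> {0<..1}" using s1 s2 unfolding s_def by auto
    moreover have "lower u s \<le> lower u s1" "upper u s2 \<le> upper u s"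
      using mono[of s s1] mono[of s s2] s1 s2 unfolding s_def by auto
    moreover have "lower u s < lower u 0 + e" using s1(2) calculation(2) by linarith
    moreover have "upper u 0 - e < upper u s" using s2(2) calculation(3) by linarith
    ultimately show "\<exists>s\<in>{0<..1}. lower u s < lower u 0 + e \<and> upper u 0 - e < upper u s"
      by blast
  qed
  show ?thesis unfolding good_def
    apply (intro conjI)
    subgoal using mono by blast
    subgoal using le by blast
    subgoal using LA by blast
    subgoal using ZA by blast
    done
qed




lemma fol_cong: "(\<And>r. r \<in> {0<..1} \<Longrightarrow> L r = L' r) \<Longrightarrow> fuzzy_of_levels L = fuzzy_of_levels L'"
  unfolding fuzzy_of_levels_def
proof (rule ext)
  fix z assume "\<And>r. r \<in> {0<..1} \<Longrightarrow> L r = L' r"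
  then have "{r \<in> {0<..1}. z \<in> L r} = {r \<in> {0<..1}. z \<in> L' r}" by auto
  then show "Sup ({0} \<union> {r \<in> {0<..1}. z \<in> L r}) = Sup ({0} \<union> {r \<in> {0<..1}. z \<in> L' r})" by simp
qed

lemma good_fol:
  assumes g: "good l h"
  defines "U \<equiv> fuzzy_of_levels (\<lambda>r. {l r..h r})"
  shows "fuzzy_number U" "\<And>r. r \<in> {0..1} \<Longrightarrow> lower U r = l r"
    "\<And>r. r \<in> {0..1} \<Longrightarrow> upper U r = h r"
proof -
  have mono: "\<And>r s. 0 \<le> r \<Longrightarrow> r \<le> s \<Longrightarrow> s \<le> 1 \<Longrightarrow> l r \<le> l s \<and> h s \<le> h r"
    and le: "\<And>r. r \<in> {0..1} \<Longrightarrow> l r \<le> h r"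
    and LA: "\<And>r e. r \<in> {0<..1} \<Longrightarrow> e > 0 \<Longrightarrow> \<exists>s\<in>{0<..<r}. l r - e < l s \<and> h s < h r + e"
    and ZA: "\<And>e. e > 0 \<Longrightarrow> \<exists>s\<in>{0<..1}. l s < l 0 + e \<and> h 0 - e < h s"
    using g unfolding good_def apply -
    subgoal by (elim conjE) blast
    subgoal by (elim conjE) blast
    subgoal by (elim conjE) blast
    subgoal by (elim conjE) blast
    done
  define X where "X z = {0} \<union> {r \<in> {0<..1}. z \<in> {l r..h r}}" for z
  have U: "U z = Sup (X z)" for z unfolding U_def fuzzy_of_levels_def X_def by simp
  have Xne: "X z \<noteq> {}" for z unfolding X_def by auto
  have Xbdd: "bdd_above (X z)" for z unfolding X_def bdd_above_def by (rule exI[of _ 1]) auto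
  have U0: "U z \<ge> 0" for z
  proof -
    have "0 \<in> X z" unfolding X_def by simp
    from cSup_upper[OF this Xbdd] show ?thesis unfolding U .
  qed
  have U1: "U z \<le> 1" for z
  proof -
    have "\<And>x. x \<in> X z \<Longrightarrow> x \<le> 1" unfolding X_def by auto
    from cSup_least[OF Xne this] show ?thesis unfolding U .
  qed
  have char: "U z \<ge> r \<longleftrightarrow> l r \<le> z \<and> z \<le> h r" if r: "r \<in> {0<..1}" for z r
  proof
    assume "l r \<le> z \<and> z \<le> h r"
    then have "r \<in> X z" using r unfolding X_def by auto
    then show "U z \<ge> r" unfolding U using Xbdd by (rule cSup_upper)
  next
    assume a: "U z \<ge> r"
    have below: "l s \<le> z \<and> z \<le> h s" if s: "s \<in> {0<..<r}" for s
    proof -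
      have "s < Sup (X z)" using a s U by auto
      then obtain t where t: "t \<in> X z" "s < t" using less_cSup_iff[OF Xne Xbdd] by blast
      then have "t \<in> {0<..1}" "l t \<le> z" "z \<le> h t" using s unfolding X_def by auto
      moreover have "l s \<le> l t" "h t \<le> h s" using mono[of s t] t s \<open>t \<in> {0<..1}\<close> by auto
      ultimately show ?thesis by auto
    qed
    have A1: "l r \<le> z + e" if e: "e > 0" for e
    proof -
      obtain s where s: "s \<in> {0<..<r}" "l r - e < l s" using LA[OF r e] by auto
      have "l s \<le> z" using below[OF s(1)] by simp
      then show ?thesis using s(2) by linarith
    qed
    have A2: "z \<le> h r + e" if e: "e > 0" for e
    proof -
      obtain s where s: "s \<in> {0<..<r}" "h s < h r + e" using LA[OF r e] by auto
      have "z \<le> h s" using below[OF s(1)] by simp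
      then show ?thesis using s(2) by linarith
    qed
    have "l r \<le> z" using A1 by (rule field_le_epsilon)
    moreover have "z \<le> h r" using A2 by (rule field_le_epsilon)
    ultimately show "l r \<le> z \<and> z \<le> h r" by simp
  qed
  have lev_pos: "level U r = {l r..h r}" if r: "r \<in> {0<..1}" for r
  proof -
    have "r \<noteq> 0" using r by simp
    then have "level U r = {z. U z \<ge> r}" by (simp only: level_def if_not_P if_False)
    also have "\<dots> = {l r..h r}"
    proof (rule set_eqI)
      fix z show "z \<in> {z. r \<le> U z} \<longleftrightarrow> z \<in> {l r..h r}" using char[OF r, of z] by simp
    qed
    finally show ?thesis .
  qed
  have pos: "U z > 0 \<longleftrightarrow> (\<exists>r\<in>{0<..1}. l r \<le> z \<and> z \<le> h r)" for z
  proof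
    assume "U z > 0"
    then have "0 < Sup (X z)" using U by simp
    then obtain t where "t \<in> X z" "0 < t" using less_cSup_iff[OF Xne Xbdd] by blast
    then show "\<exists>r\<in>{0<..1}. l r \<le> z \<and> z \<le> h r" unfolding X_def by auto
  next
    assume "\<exists>r\<in>{0<..1}. l r \<le> z \<and> z \<le> h r"
    then obtain r where r: "r \<in> {0<..1}" "l r \<le> z \<and> z \<le> h r" by auto
    then have "U z \<ge> r" using char by auto
    then show "U z > 0" using r by auto
  qed
  have lev0: "closure {z. U z > 0} = {l 0..h 0}"
  proof
    have "{z. U z > 0} \<subseteq> {l 0..h 0}"
    proof
      fix z assume "z \<in> {z. U z > 0}"
      then obtain r where r: "r \<in> {0<..1}" "l r \<le> z \<and> z \<le> h r" using pos by auto
      then show "z \<in> {l 0..h 0}" using mono[of 0 r] by auto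
    qed
    then show "closure {z. U z > 0} \<subseteq> {l 0..h 0}" by (rule closure_minimal) simp
  next
    show "{l 0..h 0} \<subseteq> closure {z. U z > 0}"
    proof
      fix z assume z: "z \<in> {l 0..h 0}"
      show "z \<in> closure {z. U z > 0}"
        unfolding closure_approachable
      proof (intro allI impI)
        fix e :: real assume e: "e > 0"
        obtain s where s: "s \<in> {0<..1}" "l s < l 0 + e" "h 0 - e < h s" using ZA[OF e] by auto
        have ls: "l s \<le> h s" using le s by auto
        define y where "y = max (l s) (min z (h s))"
        have "l s \<le> y \<and> y \<le> h s" using ls unfolding y_def by auto
        then have "U y > 0" using pos s by auto
        moreover have "dist y z < e" using z s e ls unfolding y_def dist_real_def by auto
        ultimately show "\<exists>y\<in>{z. U z > 0}. dist y z < e" by auto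
      qed
    qed
  qed
  have le0: "l 0 \<le> h 0" using le by auto
  show "fuzzy_number U"
    unfolding fuzzy_number_def
  proof (intro conjI allI impI)
    show "0 \<le> U x" "U x \<le> 1" for x using U0 U1 by auto
    have "U (l 1) \<ge> 1" using char[of 1 "l 1"] le[of 1] by auto
    then show "\<exists>x. U x = 1" using U1 by (meson order_antisym)
    show "compact (closure {x. U x > 0})" using lev0 by simp
    show "min (U x) (U y) \<le> U (t * x + (1 - t) * y)" if t: "0 \<le> t \<and> t \<le> 1" for x y t
    proof (cases "min (U x) (U y) \<le> 0")
      case True then show ?thesis using U0 by (meson order_trans)
    next
      case False
      define m where "m = min (U x) (U y)"
      have m: "m \<in> {0<..1}" using False U1 unfolding m_def by (auto simp: min_def)
      have "U x \<ge> m" "U y \<ge> m" unfolding m_def by auto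
      then have xy: "l m \<le> x" "x \<le> h m" "l m \<le> y" "y \<le> h m" using char[OF m] by auto
      have "t * l m + (1 - t) * l m \<le> t * x + (1 - t) * y"
        using xy t by (intro add_mono mult_left_mono) auto
      moreover have "t * x + (1 - t) * y \<le> t * h m + (1 - t) * h m"
        using xy t by (intro add_mono mult_left_mono) auto
      ultimately have "l m \<le> t * x + (1 - t) * y \<and> t * x + (1 - t) * y \<le> h m"
        by (simp add: algebra_simps)
      then show ?thesis using char[OF m] unfolding m_def by auto
    qed
    show "usc U" unfolding usc_def
    proof (intro allI impI)
      fix x e :: real assume e: "e > 0"
      show "\<exists>d>0. \<forall>y. \<bar>y - x\<bar> < d \<longrightarrow> U y < U x + e"
      proof (cases "U x + e > 1")
        case True then show ?thesis using U1 by (metis le_less_trans zero_less_one)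
      next
        case False
        define r where "r = U x + e"
        have r: "r \<in> {0<..1}" using False U0[of x] e unfolding r_def by auto
        have "\<not> (l r \<le> x \<and> x \<le> h r)" using char[OF r, of x] e unfolding r_def by auto
        then consider "x < l r" | "h r < x" by linarith
        then show ?thesis
        proof cases
          case 1
          show ?thesis
          proof (intro exI[of _ "l r - x"] conjI allI impI)
            show "l r - x > 0" using 1 by simp
            fix y assume "\<bar>y - x\<bar> < l r - x"
            then have "\<not> (l r \<le> y \<and> y \<le> h r)" by auto
            then show "U y < U x + e" using char[OF r, of y] unfolding r_def by auto
          qed
        next
          case 2
          show ?thesis
          proof (intro exI[of _ "x - h r"] conjI allI impI)
            show "x - h r > 0" using 2 by simp
            fix y assume "\<bar>y - x\<bar> < x - h r"
            then have "\<not> (l r \<le> y \<and> y \<le> h r)" by auto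
            then show "U y < U x + e" using char[OF r, of y] unfolding r_def by auto
          qed
        qed
      qed
    qed
  qed
  show "lower U r = l r" if r: "r \<in> {0..1}" for r
  proof (cases "r = 0")
    case True then show ?thesis using lev0 le0 by (simp add: lower_def level_def)
  next
    case False then have "r \<in> {0<..1}" using r by auto
    then show ?thesis using lev_pos le by (simp add: lower_def)
  qed
  show "upper U r = h r" if r: "r \<in> {0..1}" for r
  proof (cases "r = 0")
    case True then show ?thesis using lev0 le0 by (simp add: upper_def level_def)
  next
    case False then have "r \<in> {0<..1}" using r by auto
    then show ?thesis using lev_pos le by (simp add: upper_def)
  qed
qed




lemma good_add:
  assumes "good l1 h1" "good l2 h2"
  shows "good (\<lambda>r. l1 r + l2 r) (\<lambda>r. h1 r + h2 r)"
proof -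
  have m1: "\<And>r s. 0 \<le> r \<Longrightarrow> r \<le> s \<Longrightarrow> s \<le> 1 \<Longrightarrow> l1 r \<le> l1 s \<and> h1 s \<le> h1 r"
    and le1: "\<And>r. r \<in> {0..1} \<Longrightarrow> l1 r \<le> h1 r"
    and LA1: "\<And>r e. r \<in> {0<..1} \<Longrightarrow> e > 0 \<Longrightarrow> \<exists>s\<in>{0<..<r}. l1 r - e < l1 s \<and> h1 s < h1 r + e"
    and ZA1: "\<And>e. e > 0 \<Longrightarrow> \<exists>s\<in>{0<..1}. l1 s < l1 0 + e \<and> h1 0 - e < h1 s"
    using assms(1) unfolding good_def apply -
    subgoal by (elim conjE) blast
    subgoal by (elim conjE) blast
    subgoal by (elim conjE) blast
    subgoal by (elim conjE) blast
    done
  have m2: "\<And>r s. 0 \<le> r \<Longrightarrow> r \<le> s \<Longrightarrow> s \<le> 1 \<Longrightarrow> l2 r \<le> l2 s \<and> h2 s \<le> h2 r"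
    and le2: "\<And>r. r \<in> {0..1} \<Longrightarrow> l2 r \<le> h2 r"
    and LA2: "\<And>r e. r \<in> {0<..1} \<Longrightarrow> e > 0 \<Longrightarrow> \<exists>s\<in>{0<..<r}. l2 r - e < l2 s \<and> h2 s < h2 r + e"
    and ZA2: "\<And>e. e > 0 \<Longrightarrow> \<exists>s\<in>{0<..1}. l2 s < l2 0 + e \<and> h2 0 - e < h2 s"
    using assms(2) unfolding good_def apply -
    subgoal by (elim conjE) blast
    subgoal by (elim conjE) blast
    subgoal by (elim conjE) blast
    subgoal by (elim conjE) blast
    done
  show ?thesis unfolding good_def
    apply (intro conjI)
    subgoal
    proof (intro allI impI)
    fix r s :: real assume "0 \<le> r" "r \<le> s" "s \<le> 1"
    then show "l1 r + l2 r \<le> l1 s + l2 s \<and> h1 s + h2 s \<le> h1 r + h2 r"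
      using m1[of r s] m2[of r s] by auto
    qed
    subgoal
    proof (intro ballI)
    fix r :: real assume "r \<in> {0..1}"
    then show "l1 r + l2 r \<le> h1 r + h2 r" using le1 le2 by (simp add: add_mono)
    qed
    subgoal
    proof (intro ballI allI impI)
    fix r e :: real assume r: "r \<in> {0<..1}" and e: "e > 0"
    obtain s1 where s1: "s1 \<in> {0<..<r}" "l1 r - e/2 < l1 s1" "h1 s1 < h1 r + e/2" using LA1[OF r, of "e/2"] e by auto
    obtain s2 where s2: "s2 \<in> {0<..<r}" "l2 r - e/2 < l2 s2" "h2 s2 < h2 r + e/2" using LA2[OF r, of "e/2"] e by auto
    define s where "s = max s1 s2"
    have s: "s \<in> {0<..<r}" using s1 s2 unfolding s_def by auto
    have "l1 s1 \<le> l1 s \<and> h1 s \<le> h1 s1" using m1[of s1 s] s1 s r unfolding s_def by auto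
    moreover have "l2 s2 \<le> l2 s \<and> h2 s \<le> h2 s2" using m2[of s2 s] s2 s r unfolding s_def by auto
    ultimately have "l1 r + l2 r - e < l1 s + l2 s \<and> h1 s + h2 s < h1 r + h2 r + e"
      using s1 s2 by linarith
    then show "\<exists>s\<in>{0<..<r}. l1 r + l2 r - e < l1 s + l2 s \<and> h1 s + h2 s < h1 r + h2 r + e"
      using s by blast
    qed
    subgoal
    proof (intro allI impI)
    fix e :: real assume e: "e > 0"
    obtain s1 where s1: "s1 \<in> {0<..1}" "l1 s1 < l1 0 + e/2" "h1 0 - e/2 < h1 s1" using ZA1[of "e/2"] e by auto
    obtain s2 where s2: "s2 \<in> {0<..1}" "l2 s2 < l2 0 + e/2" "h2 0 - e/2 < h2 s2" using ZA2[of "e/2"] e by auto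
    define s where "s = min s1 s2"
    have s: "s \<in> {0<..1}" using s1 s2 unfolding s_def by auto
    have "l1 s \<le> l1 s1 \<and> h1 s1 \<le> h1 s" using m1[of s s1] s1 s unfolding s_def by auto
    moreover have "l2 s \<le> l2 s2 \<and> h2 s2 \<le> h2 s" using m2[of s s2] s2 s unfolding s_def by auto
    ultimately have "l1 s + l2 s < l1 0 + l2 0 + e \<and> h1 0 + h2 0 - e < h1 s + h2 s"
      using s1 s2 by linarith
    then show "\<exists>s\<in>{0<..1}. l1 s + l2 s < l1 0 + l2 0 + e \<and> h1 0 + h2 0 - e < h1 s + h2 s"
      using s by blast
    qed
    done
qed

lemma good_neg:
  assumes g: "good l h"
  shows "good (\<lambda>r. - h r) (\<lambda>r. - l r)"
proof -
  have m1: "\<And>r s. 0 \<le> r \<Longrightarrow> r \<le> s \<Longrightarrow> s \<le> 1 \<Longrightarrow> l r \<le> l s \<and> h s \<le> h r"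
    and le1: "\<And>r. r \<in> {0..1} \<Longrightarrow> l r \<le> h r"
    and LA1: "\<And>r e. r \<in> {0<..1} \<Longrightarrow> e > 0 \<Longrightarrow> \<exists>s\<in>{0<..<r}. l r - e < l s \<and> h s < h r + e"
    and ZA1: "\<And>e. e > 0 \<Longrightarrow> \<exists>s\<in>{0<..1}. l s < l 0 + e \<and> h 0 - e < h s"
    using g unfolding good_def apply -
    subgoal by (elim conjE) blast
    subgoal by (elim conjE) blast
    subgoal by (elim conjE) blast
    subgoal by (elim conjE) blast
    done
  show ?thesis unfolding good_def
    apply (intro conjI)
    subgoal
    proof (intro allI impI)
      fix r s :: real assume "0 \<le> r" "r \<le> s" "s \<le> 1"
      then show "- h r \<le> - h s \<and> - l s \<le> - l r" using m1[of r s] by auto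
    qed
    subgoal using le1 by simp
    subgoal
    proof (intro ballI allI impI)
      fix r e :: real assume r: "r \<in> {0<..1}" and e: "e > 0"
      obtain s where s: "s \<in> {0<..<r}" "l r - e < l s" "h s < h r + e" using LA1[OF r e] by auto
      then have "- h r - e < - h s \<and> - l s < - l r + e" by linarith
      then show "\<exists>s\<in>{0<..<r}. - h r - e < - h s \<and> - l s < - l r + e" using s by blast
    qed
    subgoal
    proof (intro allI impI)
      fix e :: real assume e: "e > 0"
      obtain s where s: "s \<in> {0<..1}" "l s < l 0 + e" "h 0 - e < h s" using ZA1[OF e] by auto
      then have "- h s < - h 0 + e \<and> - l 0 - e < - l s" by linarith
      then show "\<exists>s\<in>{0<..1}. - h s < - h 0 + e \<and> - l 0 - e < - l s" using s by blast
    qed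
    done
qed

lemma good_zero: "good (\<lambda>r. 0) (\<lambda>r. 0)"
  unfolding good_def
  apply (intro conjI)
  subgoal by simp
  subgoal by simp
  subgoal
  proof (intro ballI allI impI)
    fix r e :: real assume "r \<in> {0<..1}" "e > 0"
    then have "r/2 \<in> {0<..<r}" by auto
    moreover have "0 - e < (0::real) \<and> (0::real) < 0 + e" using \<open>e > 0\<close> by auto
    ultimately show "\<exists>s\<in>{0<..<r}. 0 - e < (0::real) \<and> (0::real) < 0 + e" by blast
  qed
  subgoal by (intro allI impI bexI[of _ 1]) auto
  done

lemma good_scale:
  assumes g: "good l h" and c: "c \<ge> 0"
  shows "good (\<lambda>r. c * l r) (\<lambda>r. c * h r)"
proof (cases "c = 0")
  case True
  show ?thesis using good_zero True by simp
next
  case False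
  then have c: "c > 0" using c by auto
  have m1: "\<And>r s. 0 \<le> r \<Longrightarrow> r \<le> s \<Longrightarrow> s \<le> 1 \<Longrightarrow> l r \<le> l s \<and> h s \<le> h r"
    and le1: "\<And>r. r \<in> {0..1} \<Longrightarrow> l r \<le> h r"
    and LA1: "\<And>r e. r \<in> {0<..1} \<Longrightarrow> e > 0 \<Longrightarrow> \<exists>s\<in>{0<..<r}. l r - e < l s \<and> h s < h r + e"
    and ZA1: "\<And>e. e > 0 \<Longrightarrow> \<exists>s\<in>{0<..1}. l s < l 0 + e \<and> h 0 - e < h s"
    using g unfolding good_def apply -
    subgoal by (elim conjE) blast
    subgoal by (elim conjE) blast
    subgoal by (elim conjE) blast
    subgoal by (elim conjE) blast
    done
  show ?thesis unfolding good_def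
    apply (intro conjI)
    subgoal
    proof (intro allI impI)
    fix r s :: real assume "0 \<le> r" "r \<le> s" "s \<le> 1"
    then show "c * l r \<le> c * l s \<and> c * h s \<le> c * h r"
      using m1[of r s] c by (auto intro: mult_left_mono)
    qed
    subgoal
    proof (intro ballI)
    fix r :: real assume "r \<in> {0..1}"
    then show "c * l r \<le> c * h r" using le1 c by (auto intro: mult_left_mono)
    qed
    subgoal
    proof (intro ballI allI impI)
    fix r e :: real assume r: "r \<in> {0<..1}" and e: "e > 0"
    obtain s where s: "s \<in> {0<..<r}" "l r - e/c < l s" "h s < h r + e/c" using LA1[OF r, of "e/c"] e c by auto
    have "c * (l r - e/c) < c * l s" "c * h s < c * (h r + e/c)" using s c by auto
    then have "c * l r - e < c * l s \<and> c * h s < c * h r + e" using c by (simp add: algebra_simps)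
    then show "\<exists>s\<in>{0<..<r}. c * l r - e < c * l s \<and> c * h s < c * h r + e" using s by blast
    qed
    subgoal
    proof (intro allI impI)
    fix e :: real assume e: "e > 0"
    obtain s where s: "s \<in> {0<..1}" "l s < l 0 + e/c" "h 0 - e/c < h s" using ZA1[of "e/c"] e c by auto
    have "c * l s < c * (l 0 + e/c)" "c * (h 0 - e/c) < c * h s" using s c by auto
    then have "c * l s < c * l 0 + e \<and> c * h 0 - e < c * h s" using c by (simp add: algebra_simps)
    then show "\<exists>s\<in>{0<..1}. c * l s < c * l 0 + e \<and> c * h 0 - e < c * h s" using s by blast
    qed
    done
qed

lemma ivl_sum:
  fixes a b c d :: real
  assumes "a \<le> b" "c \<le> d"
  shows "{x + y | x y. x \<in> {a..b} \<and> y \<in> {c..d}} = {a + c..b + d}"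
proof (rule set_eqI)
  fix z
  show "z \<in> {x + y | x y. x \<in> {a..b} \<and> y \<in> {c..d}} \<longleftrightarrow> z \<in> {a + c..b + d}"
  proof
    assume "z \<in> {x + y | x y. x \<in> {a..b} \<and> y \<in> {c..d}}"
    then show "z \<in> {a + c..b + d}" by auto
  next
    assume z: "z \<in> {a + c..b + d}"
    define x where "x = min b (max a (z - c))"
    have "x \<in> {a..b}" "z - x \<in> {c..d}" using z assms unfolding x_def by auto
    moreover have "z = x + (z - x)" by simp
    ultimately show "z \<in> {x + y | x y. x \<in> {a..b} \<and> y \<in> {c..d}}" by blast
  qed
qed

lemma fn_fadd:
  assumes u: "fuzzy_number u" and v: "fuzzy_number v"
  shows "fuzzy_number (u \<oplus>\<^sub>F v)"
    "\<And>r. r \<in> {0..1} \<Longrightarrow> lower (u \<oplus>\<^sub>F v) r = lower u r + lower v r"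
    "\<And>r. r \<in> {0..1} \<Longrightarrow> upper (u \<oplus>\<^sub>F v) r = upper u r + upper v r"
proof -
  have eq: "u \<oplus>\<^sub>F v = fuzzy_of_levels (\<lambda>r. {(\<lambda>r. lower u r + lower v r) r..(\<lambda>r. upper u r + upper v r) r})"
    unfolding fadd_def
  proof (rule fol_cong)
    fix r :: real assume r: "r \<in> {0<..1}"
    then have r': "r \<in> {0..1}" by auto
    show "{x + y |x y. x \<in> level u r \<and> y \<in> level v r} = {lower u r + lower v r..upper u r + upper v r}"
      unfolding fn_level_ivl(1)[OF u r'] fn_level_ivl(1)[OF v r']
      by (rule ivl_sum[OF fn_level_ivl(2)[OF u r'] fn_level_ivl(2)[OF v r']])
  qed
  have g: "good (\<lambda>r. lower u r + lower v r) (\<lambda>r. upper u r + upper v r)"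
    by (rule good_add[OF fn_good[OF u] fn_good[OF v]])
  show "fuzzy_number (u \<oplus>\<^sub>F v)" unfolding eq by (rule good_fol(1)[OF g])
  show "lower (u \<oplus>\<^sub>F v) r = lower u r + lower v r" if "r \<in> {0..1}" for r
    unfolding eq using good_fol(2)[OF g that] by simp
  show "upper (u \<oplus>\<^sub>F v) r = upper u r + upper v r" if "r \<in> {0..1}" for r
    unfolding eq using good_fol(3)[OF g that] by simp
qed

lemma fn_fscale:
  assumes u: "fuzzy_number u"
  shows "fuzzy_number (c \<odot>\<^sub>F u)"
    "\<And>r. r \<in> {0..1} \<Longrightarrow> lower (c \<odot>\<^sub>F u) r = (if c > 0 then c * lower u r else c * upper u r)"
    "\<And>r. r \<in> {0..1} \<Longrightarrow> upper (c \<odot>\<^sub>F u) r = (if c > 0 then c * upper u r else c * lower u r)"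
proof -
  define l where "l r = (if c > 0 then c * lower u r else c * upper u r)" for r
  define h where "h r = (if c > 0 then c * upper u r else c * lower u r)" for r
  have eq: "c \<odot>\<^sub>F u = fuzzy_of_levels (\<lambda>r. {l r..h r})"
    unfolding fscale_def
  proof (rule fol_cong)
    fix r :: real assume r: "r \<in> {0<..1}"
    then have r': "r \<in> {0..1}" by auto
    have "(\<lambda>x. c * x) ` level u r = (*) c ` {lower u r..upper u r}"
      unfolding fn_level_ivl(1)[OF u r'] by simp
    also have "\<dots> = {l r..h r}"
      unfolding image_mult_atLeastAtMost_if l_def h_def using fn_level_ivl(2)[OF u r'] by auto
    finally show "(\<lambda>x. c * x) ` level u r = {l r..h r}" .
  qed
  have g: "good l h"
  proof (cases "c > 0")
    case True
    have "good (\<lambda>r. c * lower u r) (\<lambda>r. c * upper u r)"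
      using good_scale[OF fn_good[OF u], of c] True by simp
    moreover have "l = (\<lambda>r. c * lower u r)" "h = (\<lambda>r. c * upper u r)"
      using True unfolding l_def h_def by auto
    ultimately show ?thesis by simp
  next
    case False
    have "good (\<lambda>r. (-c) * - upper u r) (\<lambda>r. (-c) * - lower u r)"
      using good_scale[OF good_neg[OF fn_good[OF u]], of "-c"] False by simp
    moreover have "l = (\<lambda>r. (-c) * - upper u r)" "h = (\<lambda>r. (-c) * - lower u r)"
      using False unfolding l_def h_def by auto
    ultimately show ?thesis by simp
  qed
  show "fuzzy_number (c \<odot>\<^sub>F u)" unfolding eq by (rule good_fol(1)[OF g])
  show "lower (c \<odot>\<^sub>F u) r = (if c > 0 then c * lower u r else c * upper u r)" if "r \<in> {0..1}" for r
    unfolding eq using good_fol(2)[OF g that] by (simp add: l_def)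
  show "upper (c \<odot>\<^sub>F u) r = (if c > 0 then c * upper u r else c * lower u r)" if "r \<in> {0..1}" for r
    unfolding eq using good_fol(3)[OF g that] by (simp add: h_def)
qed

lemma fzero_eq: "fzero = fuzzy_of_levels (\<lambda>r. {(\<lambda>r. 0::real) r..(\<lambda>r. 0) r})"
proof (rule ext)
  fix z :: real
  show "fzero z = fuzzy_of_levels (\<lambda>r. {(\<lambda>r. 0::real) r..(\<lambda>r. 0) r}) z"
  proof (cases "z = 0")
    case True
    have "{0::real} \<union> {r \<in> {0<..1}. z \<in> {0..0::real}} = {0..1}" using True by auto
    then show ?thesis using True by (simp add: fzero_def fuzzy_of_levels_def)
  next
    case False
    have "{0::real} \<union> {r \<in> {0<..1}. z \<in> {0..0::real}} = {0}" using False by auto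
    then show ?thesis using False by (simp add: fzero_def fuzzy_of_levels_def)
  qed
qed

lemma fzero_fn: "fuzzy_number fzero"
  "\<And>r. r \<in> {0..1} \<Longrightarrow> lower fzero r = 0" "\<And>r. r \<in> {0..1} \<Longrightarrow> upper fzero r = 0"
  using good_fol[OF good_zero] unfolding fzero_eq[symmetric] by auto




abbreviation dphi :: "(real\<Rightarrow>real) \<Rightarrow> (real\<Rightarrow>real) \<Rightarrow> real \<Rightarrow> real" where
  "dphi u v r \<equiv> max \<bar>lower u r - lower v r\<bar> \<bar>upper u r - upper v r\<bar>"

lemma fn_bounds:
  assumes u: "fuzzy_number u" and r: "r \<in> {0..1}"
  shows "lower u 0 \<le> lower u r" "lower u r \<le> upper u r" "upper u r \<le> upper u 0"
  using fn_lower_upper_mono[OF u, of 0 r] fn_level_ivl(2)[OF u r] r by auto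

lemma fdist_bdd:
  assumes u: "fuzzy_number u" and v: "fuzzy_number v" and A: "A \<subseteq> {0..1}"
  shows "bdd_above (dphi u v ` A)"
proof -
  define B where "B = \<bar>lower u 0\<bar> + \<bar>upper u 0\<bar> + \<bar>lower v 0\<bar> + \<bar>upper v 0\<bar>"
  have "dphi u v r \<le> B" if "r \<in> {0..1}" for r
    using fn_bounds[OF u that] fn_bounds[OF v that] unfolding B_def by auto
  then show ?thesis using A by (auto intro!: bdd_aboveI[of _ B])
qed

lemma fdist_ge:
  assumes u: "fuzzy_number u" and v: "fuzzy_number v" and r: "r \<in> {0..1}"
  shows "dphi u v r \<le> fdist u v"
  unfolding fdist_def by (rule cSUP_upper[OF r fdist_bdd[OF u v]]) simp

lemma fdist_ge':
  assumes u: "fuzzy_number u" and v: "fuzzy_number v" and r: "r \<in> {0..1}"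
  shows "\<bar>lower u r - lower v r\<bar> \<le> fdist u v" "\<bar>upper u r - upper v r\<bar> \<le> fdist u v"
  using fdist_ge[OF assms] by auto

lemma fdist_le:
  assumes "\<And>r. r \<in> {0..1} \<Longrightarrow> dphi u v r \<le> c"
  shows "fdist u v \<le> c"
  unfolding fdist_def by (rule cSUP_least) (use assms in auto)

lemma fdist_nonneg: "fuzzy_number u \<Longrightarrow> fuzzy_number v \<Longrightarrow> 0 \<le> fdist u v"
  using fdist_ge[of u v 0] by force

lemma fdist_self: "fdist u u = 0"
  unfolding fdist_def by simp

lemma fdist_sym: "fdist u v = fdist v u"
  unfolding fdist_def by (simp add: abs_minus_commute)

lemma fdist_tri:
  assumes u: "fuzzy_number u" and v: "fuzzy_number v" and w: "fuzzy_number w"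
  shows "fdist u w \<le> fdist u v + fdist v w"
proof (rule fdist_le)
  fix r :: real assume r: "r \<in> {0..1}"
  have "dphi u v r \<le> fdist u v" "dphi v w r \<le> fdist v w" using fdist_ge u v w r by auto
  then show "dphi u w r \<le> fdist u v + fdist v w" by auto
qed

lemma fdist_eq0:
  assumes u: "fuzzy_number u" and v: "fuzzy_number v" and d: "fdist u v = 0"
  shows "u = v"
proof -
  have eq: "level u r = level v r" if r: "r \<in> {0..1}" for r
  proof -
    have "dphi u v r \<le> 0" using fdist_ge[OF u v r] d by simp
    then have "lower u r = lower v r" "upper u r = upper v r" by auto
    then show ?thesis using fn_level_ivl(1)[OF u r] fn_level_ivl(1)[OF v r] by simp
  qed
  have key: "u z \<ge> v z" if u': "fuzzy_number u'" and v': "fuzzy_number v'"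
    and e: "\<And>r. r \<in> {0..1} \<Longrightarrow> level u' r = level v' r" and "u = u'" "v = v'" for z u' v'
  proof (rule ccontr)
    assume "\<not> v z \<le> u z"
    then have lt: "u' z < v' z" using that by simp
    have "u' z \<ge> 0" using fn_range[OF u'] by auto
    then have r: "v' z \<in> {0<..1}" using lt fn_range[OF v', of z] by auto
    have "z \<in> level v' (v' z)" using r by (simp add: level_def)
    then have "z \<in> level u' (v' z)" using e[of "v' z"] r by auto
    then have "u' z \<ge> v' z" using r by (simp add: level_def)
    then show False using lt by simp
  qed
  show ?thesis
  proof (rule ext)
    fix z
    have "u z \<ge> v z" using key[OF u v eq] by simp
    moreover have "v z \<ge> u z"
    proof -
      have "v z \<ge> u z" if "fuzzy_number v" "fuzzy_number u" "\<And>r. r \<in> {0..1} \<Longrightarrow> level v r = level u r"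
      proof (rule ccontr)
        assume "\<not> u z \<le> v z"
        then have lt: "v z < u z" by simp
        have "v z \<ge> 0" using fn_range[OF v] by auto
        then have r: "u z \<in> {0<..1}" using lt fn_range[OF u, of z] by auto
        have "z \<in> level u (u z)" using r by (simp add: level_def)
        then have "z \<in> level v (u z)" using eq[of "u z"] r by auto
        then have "v z \<ge> u z" using r by (simp add: level_def)
        then show False using lt by simp
      qed
      then show ?thesis using u v eq by auto
    qed
    ultimately show "u z = v z" by simp
  qed
qed

lemma fdist_add_cancel:
  assumes u: "fuzzy_number u" and v: "fuzzy_number v" and w: "fuzzy_number w"
  shows "fdist (u \<oplus>\<^sub>F w) (v \<oplus>\<^sub>F w) = fdist u v"
  unfolding fdist_def
  by (rule SUP_cong) (simp_all add: fn_fadd(2,3)[OF u w] fn_fadd(2,3)[OF v w])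

lemma fdist_add_le:
  assumes u: "fuzzy_number u" and v: "fuzzy_number v" and w: "fuzzy_number w" and z: "fuzzy_number z"
  shows "fdist (u \<oplus>\<^sub>F v) (w \<oplus>\<^sub>F z) \<le> fdist u w + fdist v z"
proof (rule fdist_le)
  fix r :: real assume r: "r \<in> {0..1}"
  have "dphi u w r \<le> fdist u w" "dphi v z r \<le> fdist v z" using fdist_ge u v w z r by auto
  then show "dphi (u \<oplus>\<^sub>F v) (w \<oplus>\<^sub>F z) r \<le> fdist u w + fdist v z"
    using fn_fadd(2,3)[OF u v r] fn_fadd(2,3)[OF w z r] by auto
qed

lemma cSUP_cmult:
  fixes f :: "real \<Rightarrow> real"
  assumes A: "A \<noteq> {}" and b: "bdd_above (f ` A)" and c: "c \<ge> 0"
  shows "(SUP x\<in>A. c * f x) = c * (SUP x\<in>A. f x)"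
proof (cases "c = 0")
  case True then show ?thesis using A by simp
next
  case False
  then have c: "c > 0" using c by auto
  have bc: "bdd_above ((\<lambda>x. c * f x) ` A)"
  proof -
    obtain M where "\<And>x. x \<in> A \<Longrightarrow> f x \<le> M" using b by (auto simp: bdd_above_def)
    then have M: "\<And>x. x \<in> A \<Longrightarrow> c * f x \<le> c * M" using c by (auto intro: mult_left_mono)
    show ?thesis unfolding bdd_above_def by (rule exI[of _ "c * M"]) (use M in blast)
  qed
  show ?thesis
  proof (rule antisym)
    show "(SUP x\<in>A. c * f x) \<le> c * (SUP x\<in>A. f x)"
    proof (rule cSUP_least[OF A])
      fix x assume x: "x \<in> A"
      show "c * f x \<le> c * (SUP x\<in>A. f x)" using cSUP_upper[OF x b] c by (simp add: mult_left_mono)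
    qed
    have "(SUP x\<in>A. f x) \<le> (SUP x\<in>A. c * f x) / c"
    proof (rule cSUP_least[OF A])
      fix x assume x: "x \<in> A"
      have "c * f x \<le> (SUP x\<in>A. c * f x)" by (rule cSUP_upper[OF x bc])
      then show "f x \<le> (SUP x\<in>A. c * f x) / c" using c by (simp add: field_simps)
    qed
    then show "c * (SUP x\<in>A. f x) \<le> (SUP x\<in>A. c * f x)" using c by (simp add: field_simps)
  qed
qed

lemma fdist_scale:
  assumes u: "fuzzy_number u" and v: "fuzzy_number v"
  shows "fdist (c \<odot>\<^sub>F u) (c \<odot>\<^sub>F v) = \<bar>c\<bar> * fdist u v"
proof -
  have "fdist (c \<odot>\<^sub>F u) (c \<odot>\<^sub>F v) = (SUP r\<in>{0..1}. \<bar>c\<bar> * dphi u v r)"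
    unfolding fdist_def
  proof (rule SUP_cong)
    fix r :: real assume r: "r \<in> {0..1}"
    show "dphi (c \<odot>\<^sub>F u) (c \<odot>\<^sub>F v) r = \<bar>c\<bar> * dphi u v r"
    proof (cases "c > 0")
      case True then show ?thesis
        using fn_fscale(2,3)[OF u r, of c] fn_fscale(2,3)[OF v r, of c]
        by (simp add: right_diff_distrib[symmetric] abs_mult max_mult_distrib_left)
    next
      case False then show ?thesis
        using fn_fscale(2,3)[OF u r, of c] fn_fscale(2,3)[OF v r, of c]
        by (simp add: right_diff_distrib[symmetric] abs_mult max_mult_distrib_left max.commute)
    qed
  qed simp
  also have "\<dots> = \<bar>c\<bar> * fdist u v"
    unfolding fdist_def by (rule cSUP_cmult) (auto intro: fdist_bdd[OF u v])
  finally show ?thesis .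
qed




definition Q01 :: "real set" where "Q01 = {0..1} \<inter> \<rat>"

lemma Q01_props: "countable Q01" "Q01 \<subseteq> {0..1}" "0 \<in> Q01" "Q01 \<noteq> {}"
proof -
  show "countable Q01" unfolding Q01_def by (rule countable_subset[OF _ countable_rat]) auto
  show "Q01 \<subseteq> {0..1}" unfolding Q01_def by auto
  show "0 \<in> Q01" unfolding Q01_def by auto
  then show "Q01 \<noteq> {}" by auto
qed

lemma good_parts:
  assumes "good l h"
  shows "\<And>r s. 0 \<le> r \<Longrightarrow> r \<le> s \<Longrightarrow> s \<le> 1 \<Longrightarrow> l r \<le> l s \<and> h s \<le> h r"
    and "\<And>r. r \<in> {0..1} \<Longrightarrow> l r \<le> h r"
    and "\<And>r e. r \<in> {0<..1} \<Longrightarrow> e > 0 \<Longrightarrow> \<exists>s\<in>{0<..<r}. l r - e < l s \<and> h s < h r + e"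
    and "\<And>e. e > 0 \<Longrightarrow> \<exists>s\<in>{0<..1}. l s < l 0 + e \<and> h 0 - e < h s"
  using assms unfolding good_def apply -
  subgoal by (elim conjE) blast
  subgoal by (elim conjE) blast
  subgoal by (elim conjE) blast
  subgoal by (elim conjE) blast
  done

lemma fdist_Q:
  assumes u: "fuzzy_number u" and v: "fuzzy_number v"
  shows "fdist u v = (SUP q\<in>Q01. dphi u v q)"
proof (rule antisym)
  have bQ: "bdd_above (dphi u v ` Q01)" using fdist_bdd[OF u v Q01_props(2)] .
  define S where "S = (SUP q\<in>Q01. dphi u v q)"
  show "fdist u v \<le> S"
  proof (rule fdist_le)
    fix r :: real assume r: "r \<in> {0..1}"
    show "dphi u v r \<le> S"
    proof (cases "r = 0")
      case True then show ?thesis unfolding S_def using cSUP_upper[OF Q01_props(3) bQ] by simp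
    next
      case False
      then have r': "r \<in> {0<..1}" using r by auto
      have "dphi u v r \<le> S + e" if e: "e > 0" for e
      proof -
        note gu = good_parts[OF fn_good[OF u]] and gv = good_parts[OF fn_good[OF v]]
        obtain s1 where s1: "s1 \<in> {0<..<r}" "lower u r - e/2 < lower u s1" "upper u s1 < upper u r + e/2"
          using gu(3)[OF r', of "e/2"] e by auto
        obtain s2 where s2: "s2 \<in> {0<..<r}" "lower v r - e/2 < lower v s2" "upper v s2 < upper v r + e/2"
          using gv(3)[OF r', of "e/2"] e by auto
        have "max s1 s2 < r" using s1 s2 by auto
        then obtain q where q: "q \<in> \<rat>" "max s1 s2 < q" "q < r" using Rats_dense_in_real by blast
        have qQ: "q \<in> Q01" using q s1 r unfolding Q01_def by auto
        have q01: "0 \<le> s1" "s1 \<le> q" "q \<le> r" "r \<le> 1" "0 \<le> s2" "s2 \<le> q" "0 \<le> q"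
          using q s1 s2 r by auto
        have a1: "lower u s1 \<le> lower u q" "lower u q \<le> lower u r" "upper u r \<le> upper u q" "upper u q \<le> upper u s1"
          using gu(1)[of s1 q] gu(1)[of q r] q01 by auto
        have a2: "lower v s2 \<le> lower v q" "lower v q \<le> lower v r" "upper v r \<le> upper v q" "upper v q \<le> upper v s2"
          using gv(1)[of s2 q] gv(1)[of q r] q01 by auto
        have "dphi u v r \<le> dphi u v q + e"
          using a1 a2 s1 s2 by auto
        also have "dphi u v q \<le> S" unfolding S_def by (rule cSUP_upper[OF qQ bQ])
        finally show ?thesis by simp
      qed
      then show ?thesis by (rule field_le_epsilon)
    qed
  qed
  show "S \<le> fdist u v" unfolding S_def
    by (rule cSUP_least[OF Q01_props(4)]) (use fdist_ge[OF u v] Q01_props(2) in auto)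
qed

lemma meas_fdist:
  assumes f: "strongly_measurable a b f" and g: "strongly_measurable a b g"
  shows "(\<lambda>x. fdist (f x) (g x)) \<in> borel_measurable (restrict_space lebesgue {a..b})"
proof -
  let ?M = "restrict_space lebesgue {a..b}"
  have sp: "space ?M = {a..b}" by (simp add: space_restrict_space)
  have ff: "\<And>x. x \<in> {a..b} \<Longrightarrow> fuzzy_number (f x)" using f unfolding strongly_measurable_def by auto
  have gf: "\<And>x. x \<in> {a..b} \<Longrightarrow> fuzzy_number (g x)" using g unfolding strongly_measurable_def by auto
  have fm: "\<And>r. r \<in> {0..1} \<Longrightarrow> (\<lambda>x. lower (f x) r) \<in> borel_measurable ?M \<and> (\<lambda>x. upper (f x) r) \<in> borel_measurable ?M"
    using f unfolding strongly_measurable_def by auto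
  have gm: "\<And>r. r \<in> {0..1} \<Longrightarrow> (\<lambda>x. lower (g x) r) \<in> borel_measurable ?M \<and> (\<lambda>x. upper (g x) r) \<in> borel_measurable ?M"
    using g unfolding strongly_measurable_def by auto
  have "(\<lambda>x. SUP q\<in>Q01. dphi (f x) (g x) q) \<in> borel_measurable ?M"
  proof (rule borel_measurable_cSUP)
    show "countable Q01" by (rule Q01_props(1))
    fix q assume q: "q \<in> Q01"
    then have q': "q \<in> {0..1}" using Q01_props(2) by auto
    have [measurable]: "(\<lambda>x. lower (f x) q) \<in> borel_measurable ?M" "(\<lambda>x. upper (f x) q) \<in> borel_measurable ?M"
      "(\<lambda>x. lower (g x) q) \<in> borel_measurable ?M" "(\<lambda>x. upper (g x) q) \<in> borel_measurable ?M"
      using fm[OF q'] gm[OF q'] by auto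
    show "(\<lambda>x. dphi (f x) (g x) q) \<in> borel_measurable ?M" by measurable
  next
    fix x assume "x \<in> space ?M"
    then have x: "x \<in> {a..b}" using sp by simp
    show "bdd_above ((\<lambda>q. dphi (f x) (g x) q) ` Q01)"
      by (rule fdist_bdd[OF ff[OF x] gf[OF x] Q01_props(2)])
  qed
  moreover have "\<And>x. x \<in> space ?M \<Longrightarrow> fdist (f x) (g x) = (SUP q\<in>Q01. dphi (f x) (g x) q)"
    using fdist_Q ff gf sp by auto
  ultimately show ?thesis using measurable_cong by (metis (no_types, lifting))
qed




lemma powr_convex0:
  fixes x y t p :: real
  assumes p: "1 \<le> p" and x: "0 \<le> x" and y: "0 \<le> y" and t: "0 \<le> t" "t \<le> 1"
  shows "(t * x + (1 - t) * y) powr p \<le> t * x powr p + (1 - t) * y powr p"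
proof -
  have tp: "s powr p \<le> s" if "0 \<le> s" "s \<le> 1" for s :: real
  proof (cases "s = 0")
    case True then show ?thesis by simp
  next
    case False then show ?thesis using powr_le_one_le[of s p] that p by auto
  qed
  consider "x = 0" | "y = 0" | "x > 0" "y > 0" using x y by linarith
  then show ?thesis
  proof cases
    case 1
    have "((1 - t) * y) powr p = (1 - t) powr p * y powr p" using t y by (simp add: powr_mult)
    also have "\<dots> \<le> (1 - t) * y powr p" using tp[of "1 - t"] t by (intro mult_right_mono) auto
    finally show ?thesis using 1 by simp
  next
    case 2
    have "(t * x) powr p = t powr p * x powr p" using t x by (simp add: powr_mult)
    also have "\<dots> \<le> t * x powr p" using tp[of t] t by (intro mult_right_mono) auto
    finally show ?thesis using 2 by simp
  next
    case 3
    have "(\<lambda>x. x powr p) ((1 - (1 - t)) *\<^sub>R x + (1 - t) *\<^sub>R y) \<le> (1 - (1 - t)) * x powr p + (1 - t) * y powr p"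
      by (rule convex_onD[OF powr_convex[OF p]]) (use t 3 in auto)
    then show ?thesis by simp
  qed
qed

lemma aux: fixes a b X U V :: real assumes "a>0" "b>0"
 shows "X*(a+b)*(a/(a+b)*U + b/(a+b)*V) = X*(a*U + b*V)"
proof -
  have k: "a + b \<noteq> 0" using assms by simp
  have k1: "(a+b)*(a/(a+b)) = a" using k by simp
  have k2: "(a+b)*(b/(a+b)) = b" using k by simp
  have "(a+b)*(a/(a+b)*U + b/(a+b)*V) = ((a+b)*(a/(a+b)))*U + ((a+b)*(b/(a+b)))*V"
    by (simp only: distrib_left mult.assoc)
  also have "\<dots> = a*U + b*V" unfolding k1 k2 ..
  finally show ?thesis by (metis mult.assoc)
qed

lemma powr_m1: "(x::real) > 0 \<Longrightarrow> x powr (p - 1) * x = x powr p"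
proof -
  assume "x > 0"
  then have "x powr (p - 1) * x = x powr (p - 1) * x powr 1" by simp
  also have "\<dots> = x powr (p - 1 + 1)" by (rule powr_add[symmetric])
  finally show ?thesis by simp
qed

lemma minkowski:
  fixes f g h :: "'a \<Rightarrow> real"
  assumes p: "1 \<le> p"
    and [measurable]: "f \<in> borel_measurable M" "g \<in> borel_measurable M" "h \<in> borel_measurable M"
    and nn: "\<And>x. x \<in> space M \<Longrightarrow> 0 \<le> f x \<and> 0 \<le> g x \<and> 0 \<le> h x \<and> h x \<le> f x + g x"
    and fi: "integrable M (\<lambda>x. f x powr p)" and gi: "integrable M (\<lambda>x. g x powr p)"
  shows "integrable M (\<lambda>x. h x powr p)"
    "(\<integral>x. h x powr p \<partial>M) powr (1/p) \<le> (\<integral>x. f x powr p \<partial>M) powr (1/p) + (\<integral>x. g x powr p \<partial>M) powr (1/p)"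
proof -
  have p0: "0 \<le> p" using p by simp
  have bound: "h x powr p \<le> 2 powr p * (f x powr p + g x powr p)" if x: "x \<in> space M" for x
  proof -
    note n = nn[OF x]
    have "h x powr p \<le> (2 * max (f x) (g x)) powr p"
      using n by (intro powr_mono2 p0) auto
    also have "\<dots> = 2 powr p * max (f x) (g x) powr p" using n by (simp add: powr_mult)
    also have "max (f x) (g x) powr p \<le> f x powr p + g x powr p"
      by (cases "f x \<le> g x") (auto simp: max_def)
    then have "2 powr p * max (f x) (g x) powr p \<le> 2 powr p * (f x powr p + g x powr p)"
      by (intro mult_left_mono) auto
    finally show ?thesis .
  qed
  show hi: "integrable M (\<lambda>x. h x powr p)"
  proof (rule Bochner_Integration.integrable_bound[where f="\<lambda>x. 2 powr p * (f x powr p + g x powr p)"])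
    show "integrable M (\<lambda>x. 2 powr p * (f x powr p + g x powr p))"
      using fi gi by auto
    show "(\<lambda>x. h x powr p) \<in> borel_measurable M" by measurable
    show "AE x in M. norm (h x powr p) \<le> norm (2 powr p * (f x powr p + g x powr p))"
      using bound by (intro AE_I2) auto
  qed
  define If where "If = (\<integral>x. f x powr p \<partial>M)"
  define Ig where "Ig = (\<integral>x. g x powr p \<partial>M)"
  define Ih where "Ih = (\<integral>x. h x powr p \<partial>M)"
  have If0: "0 \<le> If" unfolding If_def by (intro integral_nonneg_AE AE_I2) auto
  have Ig0: "0 \<le> Ig" unfolding Ig_def by (intro integral_nonneg_AE AE_I2) auto
  have Ih0: "0 \<le> Ih" unfolding Ih_def by (intro integral_nonneg_AE AE_I2) auto
  have ip: "0 < 1/p" using p by auto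
  show "Ih powr (1/p) \<le> If powr (1/p) + Ig powr (1/p)" (is "?L \<le> ?R")
    unfolding Ih_def[symmetric] If_def[symmetric] Ig_def[symmetric]
  proof -
    consider "If = 0" | "Ig = 0" | "If > 0" "Ig > 0" using If0 Ig0 by linarith
    then show ?thesis
    proof cases
      case 1
      then have "AE x in M. f x powr p = 0" using integral_nonneg_eq_0_iff_AE[OF fi] unfolding If_def by auto
      then have "AE x in M. h x powr p \<le> g x powr p"
      proof (rule AE_mp, intro AE_I2 impI)
        fix x assume x: "x \<in> space M" and "f x powr p = 0"
        then have "f x = 0" by simp
        then show "h x powr p \<le> g x powr p" using nn[OF x] by (intro powr_mono2 p0) auto
      qed
      then have "Ih \<le> Ig" unfolding Ih_def Ig_def by (rule integral_mono_AE[OF hi gi])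
      then have "Ih powr (1/p) \<le> Ig powr (1/p)" using Ih0 by (intro powr_mono2) (use ip in auto)
      then show ?thesis using 1 by simp
    next
      case 2
      then have "AE x in M. g x powr p = 0" using integral_nonneg_eq_0_iff_AE[OF gi] unfolding Ig_def by auto
      then have "AE x in M. h x powr p \<le> f x powr p"
      proof (rule AE_mp, intro AE_I2 impI)
        fix x assume x: "x \<in> space M" and "g x powr p = 0"
        then have "g x = 0" by simp
        then show "h x powr p \<le> f x powr p" using nn[OF x] by (intro powr_mono2 p0) auto
      qed
      then have "Ih \<le> If" unfolding Ih_def If_def by (rule integral_mono_AE[OF hi fi])
      then have "Ih powr (1/p) \<le> If powr (1/p)" using Ih0 by (intro powr_mono2) (use ip in auto)
      then show ?thesis using 2 by simp
    next
      case 3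
      define A where "A = If powr (1/p)"
      define B where "B = Ig powr (1/p)"
      have A: "A > 0" "A powr p = If" using 3 p unfolding A_def by (auto simp: powr_powr)
      have B: "B > 0" "B powr p = Ig" using 3 p unfolding B_def by (auto simp: powr_powr)
      define t where "t = A / (A + B)"
      have t: "0 \<le> t" "t \<le> 1" "1 - t = B / (A + B)" using A B unfolding t_def by (auto simp: field_simps)
      define C where "C = (A + B) powr (p - 1)"
      have pw: "(f x + g x) powr p \<le> C * (A powr (1 - p) * f x powr p + B powr (1 - p) * g x powr p)"
        if x: "x \<in> space M" for x
      proof -
        note n = nn[OF x]
        have e1: "t * (f x / A) = f x / (A + B)" using A B unfolding t_def by simp
        have e2: "(1 - t) * (g x / B) = g x / (A + B)" using A B unfolding t(3) by simp
        have "A + B \<noteq> 0" using A B by simp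
        then have eq: "f x + g x = (A + B) * (t * (f x / A) + (1 - t) * (g x / B))"
          unfolding e1 e2 by (simp add: add_divide_distrib[symmetric])
        have "(f x + g x) powr p = (A + B) powr p * (t * (f x / A) + (1 - t) * (g x / B)) powr p"
          unfolding eq by (rule powr_mult)
        also have "\<dots> \<le> (A + B) powr p * (t * (f x / A) powr p + (1 - t) * (g x / B) powr p)"
          using A B n t by (intro mult_left_mono powr_convex0 p) auto
        also have "(f x / A) powr p = f x powr p / A powr p" using n A by (simp add: powr_divide)
        also have "(g x / B) powr p = g x powr p / B powr p" using n B by (simp add: powr_divide)
        also have "(A + B) powr p * (t * (f x powr p / A powr p) + (1 - t) * (g x powr p / B powr p))
           = C * (A powr (1 - p) * f x powr p + B powr (1 - p) * g x powr p)"
        proof -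
          have e1: "(A + B) powr p = C * (A + B)" unfolding C_def using A B
            by (simp add: powr_m1)
          have e2: "A powr (1 - p) = A / A powr p" using A by (simp add: powr_diff)
          have e3: "B powr (1 - p) = B / B powr p" using B by (simp add: powr_diff)
          show ?thesis unfolding e1 e2 e3 t(3) unfolding t_def aux[OF A(1) B(1)] by simp
        qed
        finally show ?thesis .
      qed
      have Ci: "integrable M (\<lambda>x. C * (A powr (1 - p) * f x powr p + B powr (1 - p) * g x powr p))"
        using fi gi by auto
      have "Ih \<le> (\<integral>x. C * (A powr (1 - p) * f x powr p + B powr (1 - p) * g x powr p) \<partial>M)"
        unfolding Ih_def
      proof (rule integral_mono[OF hi Ci])
        fix x assume x: "x \<in> space M"
        have "h x powr p \<le> (f x + g x) powr p" using nn[OF x] by (intro powr_mono2 p0) auto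
        also have "\<dots> \<le> C * (A powr (1 - p) * f x powr p + B powr (1 - p) * g x powr p)" by (rule pw[OF x])
        finally show "h x powr p \<le> C * (A powr (1 - p) * f x powr p + B powr (1 - p) * g x powr p)" .
      qed
      also have "\<dots> = C * (A powr (1 - p) * If + B powr (1 - p) * Ig)"
        unfolding If_def Ig_def using fi gi by simp
      also have "\<dots> = (A + B) powr p"
      proof -
        have "A powr (1 - p) * If = A" using A 3 by (simp add: powr_diff field_simps)
        moreover have "B powr (1 - p) * Ig = B" using B 3 by (simp add: powr_diff field_simps)
        ultimately show ?thesis unfolding C_def using A B by (simp add: powr_m1)
      qed
      finally have "Ih \<le> (A + B) powr p" .
      then have "Ih powr (1/p) \<le> ((A + B) powr p) powr (1/p)" using Ih0 ip by (intro powr_mono2) auto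
      also have "\<dots> = A + B" using A B p by (simp add: powr_powr)
      finally show ?thesis unfolding A_def B_def .
    qed
  qed
qed




abbreviation "LM a b \<equiv> restrict_space lebesgue {a..b::real}"

lemma sets_ab: "{a..b::real} \<inter> space lebesgue \<in> sets lebesgue" by simp

lemma space_LM: "space (LM a b) = {a..b}" by (simp add: space_restrict_space)

lemma nn_conv: "(\<integral>\<^sup>+ x\<in>{a..b}. F x \<partial>lebesgue) = (\<integral>\<^sup>+ x. F x \<partial>LM a b)"
  by (rule nn_integral_restrict_space[OF sets_ab, symmetric])

lemma int_conv: fixes F :: "real \<Rightarrow> real" shows "(LINT x:{a..b}|lebesgue. F x) = (\<integral>x. F x \<partial>LM a b)"
  unfolding set_lebesgue_integral_def by (rule integral_restrict_space[OF sets_ab, symmetric])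

lemma Dp_conv: "Dp p a b f g = (\<integral>x. fdist (f x) (g x) powr p \<partial>LM a b) powr (1/p)"
  unfolding Dp_def int_conv ..

lemma sm_fn: "strongly_measurable a b f \<Longrightarrow> x \<in> {a..b} \<Longrightarrow> fuzzy_number (f x)"
  unfolding strongly_measurable_def by auto

lemma sm_zero: "strongly_measurable a b (\<lambda>x. fzero)"
  unfolding strongly_measurable_def using fzero_fn by auto

lemma nn_to_int:
  fixes F :: "real \<Rightarrow> real"
  assumes "F \<in> borel_measurable (LM a b)" "\<And>x. x \<in> {a..b} \<Longrightarrow> 0 \<le> F x"
    and "(\<integral>\<^sup>+ x. ennreal (F x) \<partial>LM a b) < \<infinity>"
  shows "integrable (LM a b) F"
proof (rule integrableI_bounded)
  show "F \<in> borel_measurable (LM a b)" by fact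
  have "(\<integral>\<^sup>+ x. ennreal (norm (F x)) \<partial>LM a b) = (\<integral>\<^sup>+ x. ennreal (F x) \<partial>LM a b)"
    by (rule nn_integral_cong) (use assms(2) space_LM in auto)
  then show "(\<integral>\<^sup>+ x. ennreal (norm (F x)) \<partial>LM a b) < \<infinity>" using assms(3) by simp
qed

lemma int_to_nn:
  fixes F :: "real \<Rightarrow> real"
  assumes "integrable (LM a b) F" "\<And>x. x \<in> {a..b} \<Longrightarrow> 0 \<le> F x"
  shows "(\<integral>\<^sup>+ x. ennreal (F x) \<partial>LM a b) < \<infinity>"
proof -
  have "(\<integral>\<^sup>+ x. ennreal (F x) \<partial>LM a b) = ennreal (\<integral>x. F x \<partial>LM a b)"
    by (rule nn_integral_eq_integral[OF assms(1)]) (use assms(2) space_LM in \<open>auto intro!: AE_I2\<close>)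
  then show ?thesis by simp
qed

lemma Lp_D:
  assumes "f \<in> fuzzy_Lp p a b"
  shows "strongly_measurable a b f" "integrable (LM a b) (\<lambda>x. fdist fzero (f x) powr p)"
proof -
  show sm: "strongly_measurable a b f" using assms unfolding fuzzy_Lp_def by auto
  have m: "(\<lambda>x. fdist fzero (f x)) \<in> borel_measurable (LM a b)"
    by (rule meas_fdist[OF sm_zero sm])
  show "integrable (LM a b) (\<lambda>x. fdist fzero (f x) powr p)"
    by (rule nn_to_int) (use assms m in \<open>auto simp: fuzzy_Lp_def nn_conv\<close>)
qed

lemma Lp_I:
  assumes "strongly_measurable a b f" "integrable (LM a b) (\<lambda>x. fdist fzero (f x) powr p)"
  shows "f \<in> fuzzy_Lp p a b"
  using int_to_nn[OF assms(2)] assms(1) unfolding fuzzy_Lp_def nn_conv by auto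

lemma fdist_pair_int:
  assumes p: "1 \<le> p" and f: "f \<in> fuzzy_Lp p a b" and g: "g \<in> fuzzy_Lp p a b"
  shows "integrable (LM a b) (\<lambda>x. fdist (f x) (g x) powr p)"
proof (rule minkowski(1)[OF p])
  note sf = Lp_D(1)[OF f] and sg = Lp_D(1)[OF g]
  show "(\<lambda>x. fdist (f x) fzero) \<in> borel_measurable (LM a b)"
    using meas_fdist[OF sf sm_zero] .
  show "(\<lambda>x. fdist fzero (g x)) \<in> borel_measurable (LM a b)"
    using meas_fdist[OF sm_zero sg] .
  show "(\<lambda>x. fdist (f x) (g x)) \<in> borel_measurable (LM a b)"
    using meas_fdist[OF sf sg] .
  show "integrable (LM a b) (\<lambda>x. fdist (f x) fzero powr p)"
    using Lp_D(2)[OF f] by (simp add: fdist_sym)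
  show "integrable (LM a b) (\<lambda>x. fdist fzero (g x) powr p)" using Lp_D(2)[OF g] .
  fix x assume "x \<in> space (LM a b)"
  then have x: "x \<in> {a..b}" by (simp add: space_LM)
  note fx = sm_fn[OF sf x] and gx = sm_fn[OF sg x]
  show "0 \<le> fdist (f x) fzero \<and> 0 \<le> fdist fzero (g x) \<and> 0 \<le> fdist (f x) (g x) \<and>
      fdist (f x) (g x) \<le> fdist (f x) fzero + fdist fzero (g x)"
    using fdist_nonneg[OF fx fzero_fn(1)] fdist_nonneg[OF fzero_fn(1) gx] fdist_nonneg[OF fx gx]
      fdist_tri[OF fx fzero_fn(1) gx] by auto
qed

lemma Dp_triangle:
  assumes p: "1 \<le> p" and f: "f \<in> fuzzy_Lp p a b" and g: "g \<in> fuzzy_Lp p a b" and h: "h \<in> fuzzy_Lp p a b"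
  shows "Dp p a b f h \<le> Dp p a b f g + Dp p a b g h"
  unfolding Dp_conv
proof (rule minkowski(2)[OF p])
  note sf = Lp_D(1)[OF f] and sg = Lp_D(1)[OF g] and sh = Lp_D(1)[OF h]
  show "(\<lambda>x. fdist (f x) (g x)) \<in> borel_measurable (LM a b)" using meas_fdist[OF sf sg] .
  show "(\<lambda>x. fdist (g x) (h x)) \<in> borel_measurable (LM a b)" using meas_fdist[OF sg sh] .
  show "(\<lambda>x. fdist (f x) (h x)) \<in> borel_measurable (LM a b)" using meas_fdist[OF sf sh] .
  show "integrable (LM a b) (\<lambda>x. fdist (f x) (g x) powr p)" by (rule fdist_pair_int[OF p f g])
  show "integrable (LM a b) (\<lambda>x. fdist (g x) (h x) powr p)" by (rule fdist_pair_int[OF p g h])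
  fix x assume "x \<in> space (LM a b)"
  then have x: "x \<in> {a..b}" by (simp add: space_LM)
  note fx = sm_fn[OF sf x] and gx = sm_fn[OF sg x] and hx = sm_fn[OF sh x]
  show "0 \<le> fdist (f x) (g x) \<and> 0 \<le> fdist (g x) (h x) \<and> 0 \<le> fdist (f x) (h x) \<and>
      fdist (f x) (h x) \<le> fdist (f x) (g x) + fdist (g x) (h x)"
    using fdist_nonneg[OF fx gx] fdist_nonneg[OF gx hx] fdist_nonneg[OF fx hx]
      fdist_tri[OF fx gx hx] by auto
qed

lemma sm_ffadd:
  assumes f: "strongly_measurable a b f" and g: "strongly_measurable a b g"
  shows "strongly_measurable a b (ffadd f g)"
  unfolding strongly_measurable_def
proof (intro conjI ballI)
  fix x assume x: "x \<in> {a..b}"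
  show "fuzzy_number (ffadd f g x)" unfolding ffadd_def using fn_fadd(1)[OF sm_fn[OF f x] sm_fn[OF g x]] .
next
  fix r :: real assume r: "r \<in> {0..1}"
  have fm: "(\<lambda>x. lower (f x) r) \<in> borel_measurable (LM a b)" "(\<lambda>x. upper (f x) r) \<in> borel_measurable (LM a b)"
    using f r unfolding strongly_measurable_def by auto
  have gm: "(\<lambda>x. lower (g x) r) \<in> borel_measurable (LM a b)" "(\<lambda>x. upper (g x) r) \<in> borel_measurable (LM a b)"
    using g r unfolding strongly_measurable_def by auto
  have e1: "\<And>x. x \<in> space (LM a b) \<Longrightarrow> lower (ffadd f g x) r = lower (f x) r + lower (g x) r"
    unfolding ffadd_def space_LM using fn_fadd(2)[OF sm_fn[OF f] sm_fn[OF g] r] by auto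
  have e2: "\<And>x. x \<in> space (LM a b) \<Longrightarrow> upper (ffadd f g x) r = upper (f x) r + upper (g x) r"
    unfolding ffadd_def space_LM using fn_fadd(3)[OF sm_fn[OF f] sm_fn[OF g] r] by auto
  show "(\<lambda>x. lower (ffadd f g x) r) \<in> borel_measurable (LM a b)"
    by (subst measurable_cong[OF e1]) (simp_all add: borel_measurable_add[OF fm(1) gm(1)])
  show "(\<lambda>x. upper (ffadd f g x) r) \<in> borel_measurable (LM a b)"
    by (subst measurable_cong[OF e2]) (simp_all add: borel_measurable_add[OF fm(2) gm(2)])
qed

lemma Dp_add_le:
  assumes p: "1 \<le> p" and f: "f \<in> fuzzy_Lp p a b" and g: "g \<in> fuzzy_Lp p a b"
    and h: "h \<in> fuzzy_Lp p a b" and e: "e \<in> fuzzy_Lp p a b"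
  shows "Dp p a b (ffadd f g) (ffadd h e) \<le> Dp p a b f h + Dp p a b g e"
  unfolding Dp_conv
proof (rule minkowski(2)[OF p])
  note sf = Lp_D(1)[OF f] and sg = Lp_D(1)[OF g] and sh = Lp_D(1)[OF h] and se = Lp_D(1)[OF e]
  show "(\<lambda>x. fdist (f x) (h x)) \<in> borel_measurable (LM a b)" using meas_fdist[OF sf sh] .
  show "(\<lambda>x. fdist (g x) (e x)) \<in> borel_measurable (LM a b)" using meas_fdist[OF sg se] .
  show "(\<lambda>x. fdist (ffadd f g x) (ffadd h e x)) \<in> borel_measurable (LM a b)"
    using meas_fdist[OF sm_ffadd[OF sf sg] sm_ffadd[OF sh se]] .
  show "integrable (LM a b) (\<lambda>x. fdist (f x) (h x) powr p)" by (rule fdist_pair_int[OF p f h])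
  show "integrable (LM a b) (\<lambda>x. fdist (g x) (e x) powr p)" by (rule fdist_pair_int[OF p g e])
  fix x assume "x \<in> space (LM a b)"
  then have x: "x \<in> {a..b}" by (simp add: space_LM)
  note fx = sm_fn[OF sf x] and gx = sm_fn[OF sg x] and hx = sm_fn[OF sh x] and ex = sm_fn[OF se x]
  show "0 \<le> fdist (f x) (h x) \<and> 0 \<le> fdist (g x) (e x) \<and> 0 \<le> fdist (ffadd f g x) (ffadd h e x) \<and>
      fdist (ffadd f g x) (ffadd h e x) \<le> fdist (f x) (h x) + fdist (g x) (e x)"
    using fdist_nonneg[OF fx hx] fdist_nonneg[OF gx ex]
      fdist_nonneg[OF fn_fadd(1)[OF fx gx] fn_fadd(1)[OF hx ex]]
      fdist_add_le[OF fx gx hx ex] unfolding ffadd_def by auto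
qed

lemma Dp_add_cancel:
  assumes f: "f \<in> fuzzy_Lp p a b" and g: "g \<in> fuzzy_Lp p a b" and h: "h \<in> fuzzy_Lp p a b"
  shows "Dp p a b (ffadd f h) (ffadd g h) = Dp p a b f g"
  unfolding Dp_conv
proof -
  note sf = Lp_D(1)[OF f] and sg = Lp_D(1)[OF g] and sh = Lp_D(1)[OF h]
  have "(\<integral>x. fdist (ffadd f h x) (ffadd g h x) powr p \<partial>LM a b) = (\<integral>x. fdist (f x) (g x) powr p \<partial>LM a b)"
    by (rule Bochner_Integration.integral_cong[OF refl]) (simp add: space_LM ffadd_def fdist_add_cancel sm_fn[OF sf] sm_fn[OF sg] sm_fn[OF sh])
  then show "(\<integral>x. fdist (ffadd f h x) (ffadd g h x) powr p \<partial>LM a b) powr (1 / p) =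
    (\<integral>x. fdist (f x) (g x) powr p \<partial>LM a b) powr (1 / p)" by simp
qed

lemma Dp_scale:
  assumes p: "1 \<le> p" and f: "f \<in> fuzzy_Lp p a b" and g: "g \<in> fuzzy_Lp p a b"
  shows "Dp p a b (ffscale c f) (ffscale c g) = \<bar>c\<bar> * Dp p a b f g"
  unfolding Dp_conv
proof -
  note sf = Lp_D(1)[OF f] and sg = Lp_D(1)[OF g]
  have "(\<integral>x. fdist (ffscale c f x) (ffscale c g x) powr p \<partial>LM a b) = (\<integral>x. \<bar>c\<bar> powr p * fdist (f x) (g x) powr p \<partial>LM a b)"
    by (rule Bochner_Integration.integral_cong[OF refl]) (simp add: space_LM ffscale_def fdist_scale sm_fn[OF sf] sm_fn[OF sg] powr_mult)
  also have "\<dots> = \<bar>c\<bar> powr p * (\<integral>x. fdist (f x) (g x) powr p \<partial>LM a b)" by simp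
  finally have "(\<integral>x. fdist (ffscale c f x) (ffscale c g x) powr p \<partial>LM a b) powr (1/p)
      = (\<bar>c\<bar> powr p) powr (1/p) * (\<integral>x. fdist (f x) (g x) powr p \<partial>LM a b) powr (1/p)"
    by (simp add: powr_mult)
  also have "(\<bar>c\<bar> powr p) powr (1/p) = \<bar>c\<bar>" using p by (simp add: powr_powr)
  finally show "(\<integral>x. fdist (ffscale c f x) (ffscale c g x) powr p \<partial>LM a b) powr (1/p) =
    \<bar>c\<bar> * (\<integral>x. fdist (f x) (g x) powr p \<partial>LM a b) powr (1/p)" .
qed

lemma Dp_zero_iff:
  assumes p: "1 \<le> p" and f: "f \<in> fuzzy_Lp p a b" and g: "g \<in> fuzzy_Lp p a b"
  shows "Dp p a b f g = 0 \<longleftrightarrow> (AE x in lebesgue. x \<in> {a..b} \<longrightarrow> f x = g x)"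
proof -
  note sf = Lp_D(1)[OF f] and sg = Lp_D(1)[OF g]
  have I: "integrable (LM a b) (\<lambda>x. fdist (f x) (g x) powr p)" by (rule fdist_pair_int[OF p f g])
  have "Dp p a b f g = 0 \<longleftrightarrow> (\<integral>x. fdist (f x) (g x) powr p \<partial>LM a b) = 0"
    unfolding Dp_conv by simp
  also have "\<dots> \<longleftrightarrow> (AE x in LM a b. fdist (f x) (g x) powr p = 0)"
    by (rule integral_nonneg_eq_0_iff_AE[OF I]) (auto intro!: AE_I2)
  also have "\<dots> \<longleftrightarrow> (AE x in LM a b. f x = g x)"
  proof (rule AE_cong)
    fix x assume "x \<in> space (LM a b)"
    then have x: "x \<in> {a..b}" by (simp add: space_LM)
    note fx = sm_fn[OF sf x] and gx = sm_fn[OF sg x]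
    show "fdist (f x) (g x) powr p = 0 \<longleftrightarrow> f x = g x"
      using fdist_eq0[OF fx gx] by (auto simp: fdist_self)
  qed
  also have "\<dots> \<longleftrightarrow> (AE x in lebesgue. x \<in> {a..b} \<longrightarrow> f x = g x)"
    by (rule AE_restrict_space_iff[OF sets_ab])
  finally show ?thesis .
qed




lemma fn_complete:
  assumes fn: "\<And>k. fuzzy_number (u k)"
    and C: "\<And>e. e > 0 \<Longrightarrow> \<exists>N. \<forall>m\<ge>N. \<forall>n\<ge>N. fdist (u m) (u n) < e"
  defines "L \<equiv> \<lambda>r. lim (\<lambda>k. lower (u k) r)" and "H \<equiv> \<lambda>r. lim (\<lambda>k. upper (u k) r)"
  shows "good L H" "(\<lambda>k. fdist (u k) (fuzzy_of_levels (\<lambda>r. {L r..H r}))) \<longlonglongrightarrow> 0"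
proof -
  have convL: "(\<lambda>k. lower (u k) r) \<longlonglongrightarrow> L r" if r: "r \<in> {0..1}" for r
  proof -
    have "Cauchy (\<lambda>k. lower (u k) r)"
    proof (rule CauchyI)
      fix e :: real assume "e > 0"
      then obtain N where N: "\<forall>m\<ge>N. \<forall>n\<ge>N. fdist (u m) (u n) < e" using C by blast
      show "\<exists>M. \<forall>m\<ge>M. \<forall>n\<ge>M. norm (lower (u m) r - lower (u n) r) < e"
      proof (intro exI[of _ N] allI impI)
        fix m n assume "m \<ge> N" "n \<ge> N"
        then have "fdist (u m) (u n) < e" using N by blast
        then show "norm (lower (u m) r - lower (u n) r) < e" using fdist_ge'(1)[OF fn fn r, of m n] by simp
      qed
    qed
    then show ?thesis unfolding L_def using Cauchy_convergent_iff convergent_LIMSEQ_iff by blast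
  qed
  have convH: "(\<lambda>k. upper (u k) r) \<longlonglongrightarrow> H r" if r: "r \<in> {0..1}" for r
  proof -
    have "Cauchy (\<lambda>k. upper (u k) r)"
    proof (rule CauchyI)
      fix e :: real assume "e > 0"
      then obtain N where N: "\<forall>m\<ge>N. \<forall>n\<ge>N. fdist (u m) (u n) < e" using C by blast
      show "\<exists>M. \<forall>m\<ge>M. \<forall>n\<ge>M. norm (upper (u m) r - upper (u n) r) < e"
      proof (intro exI[of _ N] allI impI)
        fix m n assume "m \<ge> N" "n \<ge> N"
        then have "fdist (u m) (u n) < e" using N by blast
        then show "norm (upper (u m) r - upper (u n) r) < e" using fdist_ge'(2)[OF fn fn r, of m n] by simp
      qed
    qed
    then show ?thesis unfolding H_def using Cauchy_convergent_iff convergent_LIMSEQ_iff by blast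
  qed
  have unif: "\<exists>N. \<forall>n\<ge>N. \<forall>r\<in>{0..1}. \<bar>lower (u n) r - L r\<bar> \<le> e \<and> \<bar>upper (u n) r - H r\<bar> \<le> e"
    if e: "e > 0" for e
  proof -
    obtain N where N: "\<forall>m\<ge>N. \<forall>n\<ge>N. fdist (u m) (u n) < e" using C e by blast
    have "\<bar>lower (u n) r - L r\<bar> \<le> e \<and> \<bar>upper (u n) r - H r\<bar> \<le> e" if n: "n \<ge> N" and r: "r \<in> {0..1}" for n r
    proof
      have "(\<lambda>m. \<bar>lower (u n) r - lower (u m) r\<bar>) \<longlonglongrightarrow> \<bar>lower (u n) r - L r\<bar>"
        by (intro tendsto_intros convL r)
      moreover have "\<forall>m\<ge>N. \<bar>lower (u n) r - lower (u m) r\<bar> \<le> e"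
      proof (intro allI impI)
        fix m assume "m \<ge> N"
        then have "fdist (u n) (u m) < e" using N n by blast
        then show "\<bar>lower (u n) r - lower (u m) r\<bar> \<le> e" using fdist_ge'(1)[OF fn fn r, of n m] by simp
      qed
      ultimately show "\<bar>lower (u n) r - L r\<bar> \<le> e" by (intro LIMSEQ_le_const2) auto
      have "(\<lambda>m. \<bar>upper (u n) r - upper (u m) r\<bar>) \<longlonglongrightarrow> \<bar>upper (u n) r - H r\<bar>"
        by (intro tendsto_intros convH r)
      moreover have "\<forall>m\<ge>N. \<bar>upper (u n) r - upper (u m) r\<bar> \<le> e"
      proof (intro allI impI)
        fix m assume "m \<ge> N"
        then have "fdist (u n) (u m) < e" using N n by blast
        then show "\<bar>upper (u n) r - upper (u m) r\<bar> \<le> e" using fdist_ge'(2)[OF fn fn r, of n m] by simp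
      qed
      ultimately show "\<bar>upper (u n) r - H r\<bar> \<le> e" by (intro LIMSEQ_le_const2) auto
    qed
    then show ?thesis by blast
  qed
  show g: "good L H" unfolding good_def
    apply (intro conjI)
    subgoal
    proof (intro allI impI)
      fix r s :: real assume rs: "0 \<le> r" "r \<le> s" "s \<le> 1"
      have m: "lower (u k) r \<le> lower (u k) s \<and> upper (u k) s \<le> upper (u k) r" for k
        using good_parts(1)[OF fn_good[OF fn] rs] .
      have "L r \<le> L s" using m rs by (intro LIMSEQ_le[OF convL convL]) auto
      moreover have "H s \<le> H r" using m rs by (intro LIMSEQ_le[OF convH convH]) auto
      ultimately show "L r \<le> L s \<and> H s \<le> H r" by simp
    qed
    subgoal
    proof (intro ballI)
      fix r :: real assume r: "r \<in> {0..1}"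
      show "L r \<le> H r" using good_parts(2)[OF fn_good[OF fn] r] by (intro LIMSEQ_le[OF convL[OF r] convH[OF r]]) auto
    qed
    subgoal
    proof (intro ballI allI impI)
      fix r e :: real assume r: "r \<in> {0<..1}" and e: "e > 0"
      obtain N where N: "\<forall>n\<ge>N. \<forall>r\<in>{0..1}. \<bar>lower (u n) r - L r\<bar> \<le> e/3 \<and> \<bar>upper (u n) r - H r\<bar> \<le> e/3"
        using unif[of "e/3"] e by auto
      obtain s where s: "s \<in> {0<..<r}" "lower (u N) r - e/3 < lower (u N) s" "upper (u N) s < upper (u N) r + e/3"
        using good_parts(3)[OF fn_good[OF fn[of N]] r, of "e/3"] e by auto
      have "r \<in> {0..1}" "s \<in> {0..1}" using r s by auto
      then have "\<bar>lower (u N) r - L r\<bar> \<le> e/3" "\<bar>upper (u N) r - H r\<bar> \<le> e/3"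
        "\<bar>lower (u N) s - L s\<bar> \<le> e/3" "\<bar>upper (u N) s - H s\<bar> \<le> e/3" using N by auto
      then have "L r - e < L s \<and> H s < H r + e" using s e by linarith
      then show "\<exists>s\<in>{0<..<r}. L r - e < L s \<and> H s < H r + e" using s by blast
    qed
    subgoal
    proof (intro allI impI)
      fix e :: real assume e: "e > 0"
      obtain N where N: "\<forall>n\<ge>N. \<forall>r\<in>{0..1}. \<bar>lower (u n) r - L r\<bar> \<le> e/3 \<and> \<bar>upper (u n) r - H r\<bar> \<le> e/3"
        using unif[of "e/3"] e by auto
      obtain s where s: "s \<in> {0<..1}" "lower (u N) s < lower (u N) 0 + e/3" "upper (u N) 0 - e/3 < upper (u N) s"
        using good_parts(4)[OF fn_good[OF fn[of N]], of "e/3"] e by auto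
      have "(0::real) \<in> {0..1}" "s \<in> {0..1}" using s by auto
      then have "\<bar>lower (u N) 0 - L 0\<bar> \<le> e/3" "\<bar>upper (u N) 0 - H 0\<bar> \<le> e/3"
        "\<bar>lower (u N) s - L s\<bar> \<le> e/3" "\<bar>upper (u N) s - H s\<bar> \<le> e/3" using N by auto
      then have "L s < L 0 + e \<and> H 0 - e < H s" using s e by linarith
      then show "\<exists>s\<in>{0<..1}. L s < L 0 + e \<and> H 0 - e < H s" using s by blast
    qed
    done
  define U where "U = fuzzy_of_levels (\<lambda>r. {L r..H r})"
  have UL: "\<And>r. r \<in> {0..1} \<Longrightarrow> lower U r = L r" and UH: "\<And>r. r \<in> {0..1} \<Longrightarrow> upper U r = H r"
    using good_fol[OF g] unfolding U_def by auto
  show "(\<lambda>k. fdist (u k) (fuzzy_of_levels (\<lambda>r. {L r..H r}))) \<longlonglongrightarrow> 0"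
    unfolding U_def[symmetric]
  proof (rule LIMSEQ_I)
    fix e :: real assume e: "e > 0"
    obtain N where N: "\<forall>n\<ge>N. \<forall>r\<in>{0..1}. \<bar>lower (u n) r - L r\<bar> \<le> e/2 \<and> \<bar>upper (u n) r - H r\<bar> \<le> e/2"
      using unif[of "e/2"] e by auto
    have "norm (fdist (u n) U - 0) < e" if n: "n \<ge> N" for n
    proof -
      have "fdist (u n) U \<le> e/2"
      proof (rule fdist_le)
        fix r :: real assume r: "r \<in> {0..1}"
        then have "\<bar>lower (u n) r - L r\<bar> \<le> e/2" "\<bar>upper (u n) r - H r\<bar> \<le> e/2" using N n by auto
        then show "dphi (u n) U r \<le> e/2" using UL[OF r] UH[OF r] by simp
      qed
      moreover have "0 \<le> fdist (u n) U" by (rule fdist_nonneg[OF fn good_fol(1)[OF g, folded U_def]])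
      ultimately show ?thesis using e by simp
    qed
    then show "\<exists>N. \<forall>n\<ge>N. norm (fdist (u n) U - 0) < e" by blast
  qed
qed




lemma finite_LM: "finite_measure (LM a b)"
  by (rule finite_measure_lebesgue_on) (metis cbox_interval lmeasurable_cbox)

lemma tail_bound:
  fixes D :: "nat \<Rightarrow> real" and u :: "nat \<Rightarrow> real \<Rightarrow> real"
  assumes fn: "\<And>k. fuzzy_number (u k)"
    and D: "\<And>k. fdist (u k) (u (Suc k)) = D k"
    and K: "\<And>k. k \<ge> K \<Longrightarrow> D k \<le> (1/2)^k"
    and j: "j \<ge> K"
  shows "fdist (u j) (u (j + n)) \<le> 2 * (1/2)^j - 2 * (1/2)^(j + n)"
proof (induction n)
  case 0 then show ?case by (simp add: fdist_self)
next
  case (Suc n)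
  have "fdist (u j) (u (j + Suc n)) \<le> fdist (u j) (u (j + n)) + fdist (u (j + n)) (u (j + Suc n))"
    using fdist_tri[OF fn fn fn] by blast
  also have "fdist (u (j + n)) (u (j + Suc n)) \<le> (1/2)^(j + n)"
    using D[of "j + n"] K[of "j + n"] j by simp
  finally show ?case using Suc by (simp add: algebra_simps)
qed

lemma Lp_complete:
  assumes p: "1 \<le> p" and s: "\<And>n. s n \<in> fuzzy_Lp p a b"
    and C: "\<forall>e>0. \<exists>N. \<forall>m\<ge>N. \<forall>n\<ge>N. Dp p a b (s m) (s n) < e"
  shows "\<exists>g\<in>fuzzy_Lp p a b. (\<lambda>n. Dp p a b (s n) g) \<longlonglongrightarrow> 0"
proof -
  let ?M = "LM a b"
  interpret FM: finite_measure ?M by (rule finite_LM)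
  have p0: "p > 0" using p by simp
  have sm: "\<And>n. strongly_measurable a b (s n)" using Lp_D(1)[OF s] .
  have fnx: "\<And>n x. x \<in> {a..b} \<Longrightarrow> fuzzy_number (s n x)" using sm_fn[OF sm] .
  have dmeas[measurable]: "\<And>m n. (\<lambda>x. fdist (s m x) (s n x)) \<in> borel_measurable ?M"
    using meas_fdist[OF sm sm] .
  have dint: "\<And>m n. integrable ?M (\<lambda>x. fdist (s m x) (s n x) powr p)"
    using fdist_pair_int[OF p s s] .
  define I where "I m n = (\<integral>x. fdist (s m x) (s n x) powr p \<partial>?M)" for m n
  have I0: "\<And>m n. 0 \<le> I m n" unfolding I_def by (intro integral_nonneg_AE AE_I2) auto
  have I_lt: "I m n < c powr p" if "Dp p a b (s m) (s n) < c" for m n c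
  proof -
    have "Dp p a b (s m) (s n) = I m n powr (1/p)" unfolding Dp_conv I_def ..
    have "I m n = (I m n powr (1/p)) powr p" using I0[of m n] p0 by (simp add: powr_powr)
    also have "\<dots> < c powr p"
      using that \<open>Dp p a b (s m) (s n) = I m n powr (1/p)\<close> p0 by (intro powr_less_mono2) auto
    finally show ?thesis .
  qed
  have "\<forall>k. \<exists>N. \<forall>m\<ge>N. \<forall>n\<ge>N. Dp p a b (s m) (s n) < ((1/2)^k)^2"
    using C by (simp add: zero_less_power)
  then obtain Nf where Nf: "\<forall>k. \<forall>m\<ge>Nf k. \<forall>n\<ge>Nf k. Dp p a b (s m) (s n) < ((1/2)^k)^2"
    using choice[OF \<open>\<forall>k. \<exists>N. _\<close>] by blast
  define \<phi> where "\<phi> k = (\<Sum>i\<le>k. Nf i) + k" for k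
  have \<phi>1: "Nf k \<le> \<phi> k" for k unfolding \<phi>_def using member_le_sum[of k "{..k}" Nf] by auto
  have \<phi>2: "Nf k \<le> \<phi> (Suc k)" for k unfolding \<phi>_def using member_le_sum[of k "{..Suc k}" Nf] by auto
  have \<phi>3: "k \<le> \<phi> k" for k unfolding \<phi>_def by simp
  define c :: "nat \<Rightarrow> real" where "c k = (1/2)^k" for k
  have c0: "0 < c k" "c k \<le> 1" for k unfolding c_def by (auto simp: power_le_one)
  define D where "D k x = fdist (s (\<phi> k) x) (s (\<phi> (Suc k)) x)" for k x
  have Dmeas[measurable]: "\<And>k. D k \<in> borel_measurable ?M" unfolding D_def by measurable
  have Dint: "\<And>k. integrable ?M (\<lambda>x. D k x powr p)" unfolding D_def using dint .
  have ID: "(\<integral>x. D k x powr p \<partial>?M) < (c k powr p)^2" for k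
  proof -
    have "Dp p a b (s (\<phi> k)) (s (\<phi> (Suc k))) < (c k)^2" using Nf \<phi>1 \<phi>2 unfolding c_def by blast
    then have "I (\<phi> k) (\<phi> (Suc k)) < ((c k)^2) powr p" by (rule I_lt)
    also have "((c k)^2) powr p = (c k powr p)^2" by (simp add: power2_eq_square powr_mult)
    finally show ?thesis unfolding I_def D_def .
  qed
  define A where "A k = {x\<in>space ?M. c k powr p \<le> D k x powr p}" for k
  have Asets[measurable]: "A k \<in> sets ?M" for k unfolding A_def by measurable
  have Ameas: "measure ?M (A k) \<le> c k" for k
  proof -
    have ck: "0 < c k" by (rule c0(1))
    have "measure ?M (A k) \<le> (\<integral>x. D k x powr p \<partial>?M) / (c k powr p)"
      unfolding A_def
      by (rule integral_Markov_inequality_measure[OF Dint Asets]) (use ck in \<open>auto intro!: AE_I2\<close>)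
    also have "\<dots> \<le> (c k powr p)^2 / (c k powr p)"
      using ID[of k] c0[of k] by (intro divide_right_mono) auto
    also have "\<dots> = c k powr p" using ck by (simp add: power2_eq_square)
    also have "\<dots> \<le> c k" using powr_le_one_le[OF c0(1) c0(2) p] .
    finally show ?thesis .
  qed
  have Afin: "emeasure ?M (A k) < \<infinity>" for k using FM.emeasure_finite[of "A k"] by (metis less_top infinity_ennreal_def)
  have Asum: "summable (\<lambda>k. measure ?M (A k))"
  proof (rule summable_comparison_test'[where g = c and N = 0])
    show "summable c" unfolding c_def by (rule summable_geometric) simp
    show "norm (measure ?M (A n)) \<le> c n" for n using Ameas[of n] by simp
  qed
  have BC: "AE x in ?M. eventually (\<lambda>k. x \<in> space ?M - A k) sequentially"
    by (rule borel_cantelli_AE1[OF Asets Afin Asum])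
  define G where "G = {x\<in>space ?M. \<exists>K. \<forall>k\<ge>K. D k x \<le> c k}"
  have Gsets[measurable]: "G \<in> sets ?M" unfolding G_def by measurable
  have Gsub: "G \<subseteq> {a..b}" unfolding G_def by (auto simp: space_LM)
  have AEG: "AE x in ?M. x \<in> G"
    using BC
  proof (rule AE_mp, intro AE_I2 impI)
    fix x assume x: "x \<in> space ?M" and ev: "eventually (\<lambda>k. x \<in> space ?M - A k) sequentially"
    then obtain K where K: "\<And>k. k \<ge> K \<Longrightarrow> x \<in> space ?M - A k" by (auto simp: eventually_sequentially)
    have "D k x \<le> c k" if k: "k \<ge> K" for k
    proof (rule ccontr)
      assume "\<not> D k x \<le> c k"
      then have "c k powr p \<le> D k x powr p" using c0[of k] p0 by (intro powr_mono2) auto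
      then have "x \<in> A k" using x unfolding A_def by auto
      then show False using K[OF k] by auto
    qed
    then show "x \<in> G" using x unfolding G_def by auto
  qed
  have cauchy_x: "\<forall>e>0. \<exists>N. \<forall>m\<ge>N. \<forall>n\<ge>N. fdist (s (\<phi> m) x) (s (\<phi> n) x) < e" if xG: "x \<in> G" for x
  proof (intro allI impI)
    fix e :: real assume e: "e > 0"
    have xab: "x \<in> {a..b}" using xG Gsub by auto
    obtain K where K: "\<And>k. k \<ge> K \<Longrightarrow> D k x \<le> c k" using xG unfolding G_def by auto
    obtain j0 where j0: "(1/2::real)^j0 < e/4" using real_arch_pow_inv[of "e/4" "1/2"] e by auto
    define N where "N = max K j0"
    have tb: "fdist (s (\<phi> N) x) (s (\<phi> (N + n)) x) \<le> 2 * (1/2)^N - 2 * (1/2)^(N + n)" for n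
      by (rule tail_bound[where u = "\<lambda>k. s (\<phi> k) x" and D = "\<lambda>k. D k x" and K = K])
        (use fnx[OF xab] K in \<open>auto simp: D_def c_def N_def\<close>)
    have tb': "fdist (s (\<phi> N) x) (s (\<phi> m) x) \<le> 2 * (1/2)^N" if "m \<ge> N" for m
    proof -
      have "fdist (s (\<phi> N) x) (s (\<phi> m) x) \<le> 2 * (1/2)^N - 2 * (1/2)^m" using tb[of "m - N"] that by simp
      moreover have "(0::real) \<le> (1/2)^m" by simp
      ultimately show ?thesis by linarith
    qed
    have cN: "(1/2::real)^N \<le> (1/2)^j0" unfolding N_def by (rule power_decreasing) auto
    show "\<exists>N. \<forall>m\<ge>N. \<forall>n\<ge>N. fdist (s (\<phi> m) x) (s (\<phi> n) x) < e"
    proof (intro exI[of _ N] allI impI)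
      fix m n assume m: "m \<ge> N" and n: "n \<ge> N"
      have "fdist (s (\<phi> m) x) (s (\<phi> n) x) \<le> fdist (s (\<phi> m) x) (s (\<phi> N) x) + fdist (s (\<phi> N) x) (s (\<phi> n) x)"
        using fdist_tri[OF fnx[OF xab] fnx[OF xab] fnx[OF xab]] by blast
      also have "\<dots> \<le> 2 * (1/2)^N + 2 * (1/2)^N"
        using tb'[OF m] tb'[OF n] by (simp add: fdist_sym)
      also have "\<dots> < e" using cN j0 by linarith
      finally show "fdist (s (\<phi> m) x) (s (\<phi> n) x) < e" .
    qed
  qed
  define L where "L x r = lim (\<lambda>k. lower (s (\<phi> k) x) r)" for x r
  define H where "H x r = lim (\<lambda>k. upper (s (\<phi> k) x) r)" for x r
  define g where "g x = (if x \<in> G then fuzzy_of_levels (\<lambda>r. {L x r..H x r}) else fzero)" for x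
  have gG: "good (L x) (H x) \<and> (\<lambda>k. fdist (s (\<phi> k) x) (g x)) \<longlonglongrightarrow> 0" if xG: "x \<in> G" for x
  proof -
    have xab: "x \<in> {a..b}" using xG Gsub by auto
    have fc: "good (\<lambda>r. lim (\<lambda>k. lower (s (\<phi> k) x) r)) (\<lambda>r. lim (\<lambda>k. upper (s (\<phi> k) x) r))"
      "(\<lambda>k. fdist (s (\<phi> k) x) (fuzzy_of_levels (\<lambda>r. {lim (\<lambda>k. lower (s (\<phi> k) x) r)..lim (\<lambda>k. upper (s (\<phi> k) x) r)}))) \<longlonglongrightarrow> 0"
      using fn_complete[where u = "\<lambda>k. s (\<phi> k) x"] fnx[OF xab] cauchy_x[OF xG] by auto
    then show ?thesis unfolding g_def L_def H_def using xG by simp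
  qed
  have g_fn: "fuzzy_number (g x)" if "x \<in> {a..b}" for x
    using gG good_fol(1) fzero_fn(1) unfolding g_def by auto
  have g_lower: "lower (g x) r = (if x \<in> G then L x r else 0)" and
       g_upper: "upper (g x) r = (if x \<in> G then H x r else 0)" if "r \<in> {0..1}" for x r
    using gG good_fol(2,3) fzero_fn(2,3) that unfolding g_def by auto
  have sm_g: "strongly_measurable a b g"
    unfolding strongly_measurable_def
  proof (intro conjI ballI)
    show "\<And>x. x \<in> {a..b} \<Longrightarrow> fuzzy_number (g x)" using g_fn .
    fix r :: real assume r: "r \<in> {0..1}"
    have lm[measurable]: "(\<lambda>x. lower (s (\<phi> k) x) r) \<in> borel_measurable ?M" "(\<lambda>x. upper (s (\<phi> k) x) r) \<in> borel_measurable ?M" for k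
      using sm r unfolding strongly_measurable_def by auto
    have Lm: "(\<lambda>x. L x r) \<in> borel_measurable ?M" unfolding L_def by (rule borel_measurable_lim_metric) (rule lm(1))
    have Hm: "(\<lambda>x. H x r) \<in> borel_measurable ?M" unfolding H_def by (rule borel_measurable_lim_metric) (rule lm(2))
    have "(\<lambda>x. if x \<in> G then L x r else 0) \<in> borel_measurable ?M"
      by (rule measurable_If_set[OF Lm]) auto
    then show "(\<lambda>x. lower (g x) r) \<in> borel_measurable ?M" using g_lower[OF r] by simp
    have "(\<lambda>x. if x \<in> G then H x r else 0) \<in> borel_measurable ?M"
      by (rule measurable_If_set[OF Hm]) auto
    then show "(\<lambda>x. upper (g x) r) \<in> borel_measurable ?M" using g_upper[OF r] by simp
  qed
  have dg_meas[measurable]: "\<And>n. (\<lambda>x. fdist (s n x) (g x)) \<in> borel_measurable ?M"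
    using meas_fdist[OF sm sm_g] .
  have conv_d: "(\<lambda>k. fdist (s n x) (s (\<phi> k) x)) \<longlonglongrightarrow> fdist (s n x) (g x)" if xG: "x \<in> G" for n x
  proof (rule LIMSEQ_I)
    fix e :: real assume e: "e > 0"
    have xab: "x \<in> {a..b}" using xG Gsub by auto
    have "(\<lambda>k. fdist (s (\<phi> k) x) (g x)) \<longlonglongrightarrow> 0" using gG[OF xG] by simp
    then obtain N where N: "\<And>k. k \<ge> N \<Longrightarrow> norm (fdist (s (\<phi> k) x) (g x) - 0) < e"
      using LIMSEQ_D e by blast
    have "norm (fdist (s n x) (s (\<phi> k) x) - fdist (s n x) (g x)) < e" if k: "k \<ge> N" for k
    proof -
      note f1 = fnx[OF xab] and f2 = g_fn[OF xab]
      have "fdist (s n x) (s (\<phi> k) x) \<le> fdist (s n x) (g x) + fdist (g x) (s (\<phi> k) x)"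
        using fdist_tri[OF f1 f2 f1] .
      moreover have "fdist (s n x) (g x) \<le> fdist (s n x) (s (\<phi> k) x) + fdist (s (\<phi> k) x) (g x)"
        using fdist_tri[OF f1 f1 f2] .
      moreover have "fdist (s (\<phi> k) x) (g x) < e" using N[OF k] by simp
      ultimately show ?thesis by (simp add: fdist_sym)
    qed
    then show "\<exists>N. \<forall>k\<ge>N. norm (fdist (s n x) (s (\<phi> k) x) - fdist (s n x) (g x)) < e" by blast
  qed
  have fatou: "(\<integral>\<^sup>+x. ennreal (fdist (s n x) (g x) powr p) \<partial>?M)
      \<le> liminf (\<lambda>k. \<integral>\<^sup>+x. ennreal (fdist (s n x) (s (\<phi> k) x) powr p) \<partial>?M)" for n
  proof -
    have "(\<integral>\<^sup>+x. ennreal (fdist (s n x) (g x) powr p) \<partial>?M)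
        = (\<integral>\<^sup>+x. liminf (\<lambda>k. ennreal (fdist (s n x) (s (\<phi> k) x) powr p)) \<partial>?M)"
    proof (rule nn_integral_cong_AE)
      show "AE x in ?M. ennreal (fdist (s n x) (g x) powr p) = liminf (\<lambda>k. ennreal (fdist (s n x) (s (\<phi> k) x) powr p))"
        using AEG
      proof (rule AE_mp, intro AE_I2 impI)
        fix x assume "x \<in> space ?M" and xG: "x \<in> G"
        have xab: "x \<in> {a..b}" using xG Gsub by auto
        have "(\<lambda>k. ennreal (fdist (s n x) (s (\<phi> k) x) powr p)) \<longlonglongrightarrow> ennreal (fdist (s n x) (g x) powr p)"
          using p0 fdist_nonneg[OF fnx[OF xab] fnx[OF xab]]
          by (intro tendsto_ennrealI tendsto_powr' conv_d[OF xG] tendsto_const) auto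
        then show "ennreal (fdist (s n x) (g x) powr p) = liminf (\<lambda>k. ennreal (fdist (s n x) (s (\<phi> k) x) powr p))"
          using lim_imp_Liminf[OF trivial_limit_sequentially] by metis
      qed
    qed
    also have "\<dots> \<le> liminf (\<lambda>k. \<integral>\<^sup>+x. ennreal (fdist (s n x) (s (\<phi> k) x) powr p) \<partial>?M)"
      by (rule nn_integral_liminf) measurable
    finally show ?thesis .
  qed
  have bound: "\<exists>N. \<forall>n\<ge>N. (\<integral>\<^sup>+x. ennreal (fdist (s n x) (g x) powr p) \<partial>?M) \<le> ennreal (e powr p)" if e: "e > 0" for e
  proof -
    obtain N where N: "\<forall>m\<ge>N. \<forall>n\<ge>N. Dp p a b (s m) (s n) < e" using C e by blast
    have "(\<integral>\<^sup>+x. ennreal (fdist (s n x) (g x) powr p) \<partial>?M) \<le> ennreal (e powr p)" if n: "n \<ge> N" for n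
    proof -
      have ev: "eventually (\<lambda>k. (\<integral>\<^sup>+x. ennreal (fdist (s n x) (s (\<phi> k) x) powr p) \<partial>?M) \<le> ennreal (e powr p)) sequentially"
        unfolding eventually_sequentially
      proof (intro exI[of _ N] allI impI)
        fix k assume k: "k \<ge> N"
        then have "\<phi> k \<ge> N" using \<phi>3[of k] by simp
        then have "I n (\<phi> k) < e powr p" using N n by (intro I_lt) blast
        moreover have "(\<integral>\<^sup>+x. ennreal (fdist (s n x) (s (\<phi> k) x) powr p) \<partial>?M) = ennreal (I n (\<phi> k))"
          unfolding I_def by (rule nn_integral_eq_integral[OF dint]) (auto intro!: AE_I2)
        ultimately show "(\<integral>\<^sup>+x. ennreal (fdist (s n x) (s (\<phi> k) x) powr p) \<partial>?M) \<le> ennreal (e powr p)"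
          by (simp add: ennreal_leI)
      qed
      have "liminf (\<lambda>k. \<integral>\<^sup>+x. ennreal (fdist (s n x) (s (\<phi> k) x) powr p) \<partial>?M)
          \<le> limsup (\<lambda>k. \<integral>\<^sup>+x. ennreal (fdist (s n x) (s (\<phi> k) x) powr p) \<partial>?M)"
        by (rule Liminf_le_Limsup) simp
      also have "\<dots> \<le> ennreal (e powr p)" by (rule Limsup_bounded[OF ev])
      finally show ?thesis using fatou[of n] by simp
    qed
    then show ?thesis by blast
  qed
  have dg_int: "integrable ?M (\<lambda>x. fdist (s n x) (g x) powr p)"
    if "(\<integral>\<^sup>+x. ennreal (fdist (s n x) (g x) powr p) \<partial>?M) \<le> ennreal c'" for n c'
  proof (rule nn_to_int)
    show "(\<lambda>x. fdist (s n x) (g x) powr p) \<in> borel_measurable ?M" by measurable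
    show "0 \<le> fdist (s n x) (g x) powr p" for x by simp
    show "(\<integral>\<^sup>+x. ennreal (fdist (s n x) (g x) powr p) \<partial>?M) < \<infinity>"
      using that by (metis ennreal_less_top order.strict_trans1 infinity_ennreal_def)
  qed
  obtain N1 where N1: "\<forall>n\<ge>N1. (\<integral>\<^sup>+x. ennreal (fdist (s n x) (g x) powr p) \<partial>?M) \<le> ennreal (1 powr p)"
    using bound[of 1] by auto
  have gLp: "g \<in> fuzzy_Lp p a b"
  proof (rule Lp_I[OF sm_g])
    show "integrable ?M (\<lambda>x. fdist fzero (g x) powr p)"
    proof (rule minkowski(1)[OF p])
      show "(\<lambda>x. fdist fzero (s N1 x)) \<in> borel_measurable ?M" using meas_fdist[OF sm_zero sm] .
      show "(\<lambda>x. fdist (s N1 x) (g x)) \<in> borel_measurable ?M" by measurable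
      show "(\<lambda>x. fdist fzero (g x)) \<in> borel_measurable ?M" using meas_fdist[OF sm_zero sm_g] .
      show "integrable ?M (\<lambda>x. fdist fzero (s N1 x) powr p)" using Lp_D(2)[OF s] .
      show "integrable ?M (\<lambda>x. fdist (s N1 x) (g x) powr p)" using dg_int N1 by blast
      fix x assume "x \<in> space ?M"
      then have x: "x \<in> {a..b}" by (simp add: space_LM)
      note f1 = fnx[OF x] and f2 = g_fn[OF x]
      show "0 \<le> fdist fzero (s N1 x) \<and> 0 \<le> fdist (s N1 x) (g x) \<and> 0 \<le> fdist fzero (g x) \<and>
          fdist fzero (g x) \<le> fdist fzero (s N1 x) + fdist (s N1 x) (g x)"
        using fdist_nonneg[OF fzero_fn(1) f1] fdist_nonneg[OF f1 f2] fdist_nonneg[OF fzero_fn(1) f2]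
          fdist_tri[OF fzero_fn(1) f1 f2] by auto
    qed
  qed
  have Dp_le: "\<exists>N. \<forall>n\<ge>N. Dp p a b (s n) g \<le> e" if e: "e > 0" for e
  proof -
    obtain N where N: "\<forall>n\<ge>N. (\<integral>\<^sup>+x. ennreal (fdist (s n x) (g x) powr p) \<partial>?M) \<le> ennreal (e powr p)"
      using bound[OF e] by auto
    have "Dp p a b (s n) g \<le> e" if n: "n \<ge> N" for n
    proof -
      have "(\<integral>x. fdist (s n x) (g x) powr p \<partial>?M) = enn2real (\<integral>\<^sup>+x. ennreal (fdist (s n x) (g x) powr p) \<partial>?M)"
        by (rule integral_eq_nn_integral) (auto intro!: AE_I2)
      also have "\<dots> \<le> enn2real (ennreal (e powr p))"
        using N n by (intro enn2real_mono) auto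
      also have "\<dots> = e powr p" by simp
      finally have le: "(\<integral>x. fdist (s n x) (g x) powr p \<partial>?M) \<le> e powr p" .
      have "Dp p a b (s n) g = (\<integral>x. fdist (s n x) (g x) powr p \<partial>?M) powr (1/p)" by (rule Dp_conv)
      also have "\<dots> \<le> (e powr p) powr (1/p)"
        using le p0 by (intro powr_mono2) (auto intro!: integral_nonneg_AE AE_I2)
      also have "\<dots> = e" using e p0 by (simp add: powr_powr)
      finally show ?thesis .
    qed
    then show ?thesis by blast
  qed
  have "(\<lambda>n. Dp p a b (s n) g) \<longlonglongrightarrow> 0"
  proof (rule LIMSEQ_I)
    fix e :: real assume e: "e > 0"
    obtain N where N: "\<forall>n\<ge>N. Dp p a b (s n) g \<le> e/2" using Dp_le[of "e/2"] e by auto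
    have "norm (Dp p a b (s n) g - 0) < e" if "n \<ge> N" for n
    proof -
      have "0 \<le> Dp p a b (s n) g" unfolding Dp_def by simp
      then show ?thesis using N that e by auto
    qed
    then show "\<exists>N. \<forall>n\<ge>N. norm (Dp p a b (s n) g - 0) < e" by blast
  qed
  then show ?thesis using gLp by blast
qed




theorem theorem2p6:
  fixes a b :: real
  shows
  "(\<forall>f. strongly_measurable a b f \<longrightarrow>
        (\<lambda>x. fdist fzero (f x)) \<in> borel_measurable (restrict_space lebesgue {a..b}))
   \<and>
   (\<forall>p::real. 1 \<le> p \<longrightarrow>
      (\<forall>f\<in>fuzzy_Lp p a b. \<forall>g\<in>fuzzy_Lp p a b.
          (\<lambda>x. fdist (f x) (g x)) \<in> borel_measurable (restrict_space lebesgue {a..b}) \<and>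
          (\<integral>\<^sup>+ x\<in>{a..b}. ennreal (fdist (f x) (g x) powr p) \<partial>lebesgue) < \<infinity>)
    \<and> (\<forall>f\<in>fuzzy_Lp p a b. Dp p a b f f = 0)
    \<and> (\<forall>f\<in>fuzzy_Lp p a b. \<forall>g\<in>fuzzy_Lp p a b. 0 \<le> Dp p a b f g)
    \<and> (\<forall>f\<in>fuzzy_Lp p a b. \<forall>g\<in>fuzzy_Lp p a b.
          Dp p a b f g = 0 \<longleftrightarrow> (AE x in lebesgue. x \<in> {a..b} \<longrightarrow> f x = g x))
    \<and> (\<forall>f\<in>fuzzy_Lp p a b. \<forall>g\<in>fuzzy_Lp p a b. Dp p a b f g = Dp p a b g f)
    \<and> (\<forall>f\<in>fuzzy_Lp p a b. \<forall>g\<in>fuzzy_Lp p a b. \<forall>h\<in>fuzzy_Lp p a b.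
          Dp p a b f h \<le> Dp p a b f g + Dp p a b g h)
    \<and> (\<forall>s. (\<forall>n. s n \<in> fuzzy_Lp p a b) \<longrightarrow>
          (\<forall>e>0. \<exists>N. \<forall>m\<ge>N. \<forall>n\<ge>N. Dp p a b (s m) (s n) < e) \<longrightarrow>
          (\<exists>g\<in>fuzzy_Lp p a b. (\<lambda>n. Dp p a b (s n) g) \<longlonglongrightarrow> 0))
    \<and> (\<forall>f\<in>fuzzy_Lp p a b. \<forall>g\<in>fuzzy_Lp p a b. \<forall>h\<in>fuzzy_Lp p a b.
          Dp p a b (ffadd f h) (ffadd g h) = Dp p a b f g)
    \<and> (\<forall>f\<in>fuzzy_Lp p a b. \<forall>g\<in>fuzzy_Lp p a b. \<forall>c::real.
          Dp p a b (ffscale c f) (ffscale c g) = \<bar>c\<bar> * Dp p a b f g)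
    \<and> (\<forall>f\<in>fuzzy_Lp p a b. \<forall>g\<in>fuzzy_Lp p a b. \<forall>h\<in>fuzzy_Lp p a b. \<forall>e\<in>fuzzy_Lp p a b.
          Dp p a b (ffadd f g) (ffadd h e) \<le> Dp p a b f h + Dp p a b g e))"
proof (intro conjI allI impI ballI)
  fix f assume "strongly_measurable a b f"
  then show "(\<lambda>x. fdist fzero (f x)) \<in> borel_measurable (restrict_space lebesgue {a..b})"
    by (rule meas_fdist[OF sm_zero])
next
  fix p :: real and f g assume p: "1 \<le> p" and f: "f \<in> fuzzy_Lp p a b" and g: "g \<in> fuzzy_Lp p a b"
  show "(\<lambda>x. fdist (f x) (g x)) \<in> borel_measurable (restrict_space lebesgue {a..b})"
    by (rule meas_fdist[OF Lp_D(1)[OF f] Lp_D(1)[OF g]])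
  show "(\<integral>\<^sup>+ x\<in>{a..b}. ennreal (fdist (f x) (g x) powr p) \<partial>lebesgue) < \<infinity>"
    unfolding nn_conv by (rule int_to_nn[OF fdist_pair_int[OF p f g]]) simp
next
  fix p :: real and f assume "1 \<le> p" "f \<in> fuzzy_Lp p a b"
  show "Dp p a b f f = 0" by (simp add: Dp_def fdist_self)
next
  fix p :: real and f g assume "1 \<le> p" "f \<in> fuzzy_Lp p a b" "g \<in> fuzzy_Lp p a b"
  show "0 \<le> Dp p a b f g" by (simp add: Dp_def)
next
  fix p :: real and f g assume p: "1 \<le> p" and f: "f \<in> fuzzy_Lp p a b" and g: "g \<in> fuzzy_Lp p a b"
  show "Dp p a b f g = 0 \<longleftrightarrow> (AE x in lebesgue. x \<in> {a..b} \<longrightarrow> f x = g x)"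
    by (rule Dp_zero_iff[OF p f g])
next
  fix p :: real and f g assume "1 \<le> p" "f \<in> fuzzy_Lp p a b" "g \<in> fuzzy_Lp p a b"
  show "Dp p a b f g = Dp p a b g f" by (simp add: Dp_def fdist_sym)
next
  fix p :: real and f g h assume p: "1 \<le> p" and f: "f \<in> fuzzy_Lp p a b" and g: "g \<in> fuzzy_Lp p a b"
    and h: "h \<in> fuzzy_Lp p a b"
  show "Dp p a b f h \<le> Dp p a b f g + Dp p a b g h" by (rule Dp_triangle[OF p f g h])
next
  fix p :: real and s :: "nat \<Rightarrow> real \<Rightarrow> real \<Rightarrow> real" assume p: "1 \<le> p" and s: "\<forall>n. s n \<in> fuzzy_Lp p a b"
    and C: "\<forall>e>0. \<exists>N. \<forall>m\<ge>N. \<forall>n\<ge>N. Dp p a b (s m) (s n) < e"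
  show "\<exists>g\<in>fuzzy_Lp p a b. (\<lambda>n. Dp p a b (s n) g) \<longlonglongrightarrow> 0"
    by (rule Lp_complete[OF p _ C]) (use s in blast)
next
  fix p :: real and f g h assume p: "1 \<le> p" and f: "f \<in> fuzzy_Lp p a b" and g: "g \<in> fuzzy_Lp p a b"
    and h: "h \<in> fuzzy_Lp p a b"
  show "Dp p a b (ffadd f h) (ffadd g h) = Dp p a b f g" by (rule Dp_add_cancel[OF f g h])
next
  fix p :: real and f g and c :: real assume p: "1 \<le> p" and f: "f \<in> fuzzy_Lp p a b" and g: "g \<in> fuzzy_Lp p a b"
  show "Dp p a b (ffscale c f) (ffscale c g) = \<bar>c\<bar> * Dp p a b f g" by (rule Dp_scale[OF p f g])
next
  fix p :: real and f g h e assume p: "1 \<le> p" and f: "f \<in> fuzzy_Lp p a b" and g: "g \<in> fuzzy_Lp p a b"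
    and h: "h \<in> fuzzy_Lp p a b" and e: "e \<in> fuzzy_Lp p a b"
  show "Dp p a b (ffadd f g) (ffadd h e) \<le> Dp p a b f h + Dp p a b g e" by (rule Dp_add_le[OF p f g h e])
qed


end
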